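(* In the setting of the context, $F=E_M\circ E_{M_1}$ restricts to a faithful linear functional $F:C\to k$; i.e. for $c\in C$, $F(cC)=0$ implies $c=0$.
   Context: $k$ is a field; $C_R(S)=\{r\in R:rs=sr\ \forall s\in S\}$. $N\subseteq M$ is a strongly separable, irreducible extension of $k$-algebras: $C_M(N)=k1$ and there are an $N$-bimodule map $E:M\to N$ and $x_1,\dots,x_n,y_1,\dots,y_n\in M$ with $\sum_iE(mx_i)y_i=m=\sum_ix_iE(y_im)$ for all $m\in M$, $E(1)\neq0$, $\sum_ix_iy_i\neq0$; normalized so that $E(1)=1$, whence $\sum_ix_iy_i=\lambda^{-1}1$ with $0\neq\lambda\in k$. Basic construction: given $S\subseteq R$, an $S$-bimodule map $E_S:R\to S$ with $E_S(1)=1$ and $r_i,s_i\in R$ with $\sum_iE_S(rr_i)s_i=r=\sum_ir_iE_S(s_ir)$ and $\sum_ir_is_i=\lambda^{-1}1$, set $R_1=R\otimes_SR$ with product $(a\otimes b)(c\otimes d)=aE_S(bc)\otimes d$, unit $\sum_ir_i\otimes s_i$, $R\subseteq R_1$ via $r\mapsto\sum_irr_i\otimes s_i$, $E_R:R_1\to R$, $a\otimes b\mapsto\lambda ab$; then $E_R$, $\lambda^{-1}r_i\otimes1$, $1\otimes s_i$ satisfy the same conditions with the same $\lambda$. From $(N\subseteq M,E)$ get $M_1,E_M$; from $(M\subseteq M_1,E_M)$ get $M_2,E_{M_1}$. Let $A=C_{M_1}(N)$, $B=C_{M_2}(M)$, $C=C_{M_2}(N)$. Depth 2 is assumed: $M_1$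 is free as right $M$-module with basis in $A$, $M_2$ free as right $M_1$-module with basis in $B$. For $c\in C$, $E_M(E_{M_1}(c))\in C_M(N)=k1$, identified with $k$. *)

theory Defs
  imports "HOL-Algebra.Algebra"
begin

definition kring :: "'k::field ring" where
  "kring = \<lparr>carrier = UNIV, Group.monoid.mult = (*), one = 1, ring.zero = 0, ring.add = (+)\<rparr>"

definition kalg :: "('k::field, 'a) module \<Rightarrow> bool" where
  "kalg R \<longleftrightarrow> ring R \<and> module kring R \<and>
     (\<forall>c a b. a \<in> carrier R \<longrightarrow> b \<in> carrier R \<longrightarrow>
        (c \<odot>\<^bsub>R\<^esub> a) \<otimes>\<^bsub>R\<^esub> b = c \<odot>\<^bsub>R\<^esub> (a \<otimes>\<^bsub>R\<^esub> b) \<and>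
        a \<otimes>\<^bsub>R\<^esub> (c \<odot>\<^bsub>R\<^esub> b) = c \<odot>\<^bsub>R\<^esub> (a \<otimes>\<^bsub>R\<^esub> b))"

definition subalg :: "'a set \<Rightarrow> ('k::field, 'a) module \<Rightarrow> bool" where
  "subalg S R \<longleftrightarrow> S \<subseteq> carrier R \<and> \<one>\<^bsub>R\<^esub> \<in> S \<and> \<zero>\<^bsub>R\<^esub> \<in> S \<and>
     (\<forall>a\<in>S. \<forall>b\<in>S. a \<oplus>\<^bsub>R\<^esub> b \<in> S \<and> a \<otimes>\<^bsub>R\<^esub> b \<in> S) \<and>
     (\<forall>c. \<forall>a\<in>S. c \<odot>\<^bsub>R\<^esub> a \<in> S)"

definition alg_centralizer :: "('k::field, 'a) module \<Rightarrow> 'a set \<Rightarrow> 'a set" where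
  "alg_centralizer R U = {r \<in> carrier R. \<forall>s\<in>U. r \<otimes>\<^bsub>R\<^esub> s = s \<otimes>\<^bsub>R\<^esub> r}"

definition supp :: "('b \<Rightarrow> 'k::zero) \<Rightarrow> 'b set" where
  "supp f = {p. f p \<noteq> 0}"

text \<open>Finite formal k-linear combinations of pairs of elements of R.\<close>
definition fsums :: "('k::field, 'a) module \<Rightarrow> ('a \<times> 'a \<Rightarrow> 'k) set" where
  "fsums R = {f. finite (supp f) \<and> supp f \<subseteq> carrier R \<times> carrier R}"

definition dlt :: "'a \<Rightarrow> 'a \<Rightarrow> 'a \<times> 'a \<Rightarrow> 'k::field" where
  "dlt a b = (\<lambda>p. if p = (a, b) then 1 else 0)"

text \<open>The k-subspace of relations defining \<open>R \<otimes>_S R\<close>: k-bilinearity and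
  S-balancedness.\<close>
inductive_set tens_rel :: "('k::field, 'a) module \<Rightarrow> 'a set \<Rightarrow> ('a \<times> 'a \<Rightarrow> 'k) set"
  for R S where
  zero: "(\<lambda>_. 0) \<in> tens_rel R S"
| add: "f \<in> tens_rel R S \<Longrightarrow> g \<in> tens_rel R S \<Longrightarrow> (\<lambda>p. f p + g p) \<in> tens_rel R S"
| smul: "f \<in> tens_rel R S \<Longrightarrow> (\<lambda>p. c * f p) \<in> tens_rel R S"
| addl: "a \<in> carrier R \<Longrightarrow> a' \<in> carrier R \<Longrightarrow> b \<in> carrier R \<Longrightarrow>
     (\<lambda>p. dlt (a \<oplus>\<^bsub>R\<^esub> a') b p - dlt a b p - dlt a' b p) \<in> tens_rel R S"
| addr: "a \<in> carrier R \<Longrightarrow> b \<in> carrier R \<Longrightarrow> b' \<in> carrier R \<Longrightarrow>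
     (\<lambda>p. dlt a (b \<oplus>\<^bsub>R\<^esub> b') p - dlt a b p - dlt a b' p) \<in> tens_rel R S"
| scl: "a \<in> carrier R \<Longrightarrow> b \<in> carrier R \<Longrightarrow>
     (\<lambda>p. dlt (c \<odot>\<^bsub>R\<^esub> a) b p - c * dlt a b p) \<in> tens_rel R S"
| scr: "a \<in> carrier R \<Longrightarrow> b \<in> carrier R \<Longrightarrow>
     (\<lambda>p. dlt a (c \<odot>\<^bsub>R\<^esub> b) p - c * dlt a b p) \<in> tens_rel R S"
| bal: "a \<in> carrier R \<Longrightarrow> b \<in> carrier R \<Longrightarrow> s \<in> S \<Longrightarrow>
     (\<lambda>p. dlt (a \<otimes>\<^bsub>R\<^esub> s) b p - dlt a (s \<otimes>\<^bsub>R\<^esub> b) p) \<in> tens_rel R S"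

text \<open>Equivalence class of a formal sum; elements of \<open>R \<otimes>_S R\<close> are such classes.\<close>
definition tens_class :: "('k::field, 'a) module \<Rightarrow> 'a set \<Rightarrow> ('a \<times> 'a \<Rightarrow> 'k) \<Rightarrow> ('a \<times> 'a \<Rightarrow> 'k) set" where
  "tens_class R S f = {g \<in> fsums R. (\<lambda>p. f p - g p) \<in> tens_rel R S}"

definition tens_carrier :: "('k::field, 'a) module \<Rightarrow> 'a set \<Rightarrow> ('a \<times> 'a \<Rightarrow> 'k) set set" where
  "tens_carrier R S = tens_class R S ` fsums R"

definition rep :: "'b set \<Rightarrow> 'b" where
  "rep U = (SOME f. f \<in> U)"

text \<open>Bilinear extension of \<open>(a \<otimes> b)(c \<otimes> d) = a E_S(bc) \<otimes> d\<close> to formal sums.\<close>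
definition bc_mult :: "('k::field, 'a) module \<Rightarrow> ('a \<Rightarrow> 'a) \<Rightarrow> ('a \<times> 'a \<Rightarrow> 'k) \<Rightarrow> ('a \<times> 'a \<Rightarrow> 'k) \<Rightarrow> ('a \<times> 'a \<Rightarrow> 'k)" where
  "bc_mult R ES f g = (\<lambda>t. \<Sum>p\<in>supp f. \<Sum>q\<in>supp g.
      f p * g q * dlt (fst p \<otimes>\<^bsub>R\<^esub> ES (snd p \<otimes>\<^bsub>R\<^esub> fst q)) (snd q) t)"

definition basic_constr :: "('k::field, 'a) module \<Rightarrow> 'a set \<Rightarrow> ('a \<Rightarrow> 'a) \<Rightarrow>
    (nat \<Rightarrow> 'a) \<Rightarrow> (nat \<Rightarrow> 'a) \<Rightarrow> nat \<Rightarrow> ('k, ('a \<times> 'a \<Rightarrow> 'k) set) module" where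
  "basic_constr R S ES r s n =
    \<lparr>carrier = tens_carrier R S,
     Group.monoid.mult = (\<lambda>U Y. tens_class R S (bc_mult R ES (rep U) (rep Y))),
     one = tens_class R S (\<lambda>p. \<Sum>i<n. dlt (r i) (s i) p),
     ring.zero = tens_class R S (\<lambda>_. 0),
     ring.add = (\<lambda>U Y. tens_class R S (\<lambda>p. rep U p + rep Y p)),
     smult = (\<lambda>c U. tens_class R S (\<lambda>p. c * rep U p))\<rparr>"

definition bc_incl :: "('k::field, 'a) module \<Rightarrow> 'a set \<Rightarrow> (nat \<Rightarrow> 'a) \<Rightarrow> (nat \<Rightarrow> 'a) \<Rightarrow> nat \<Rightarrow>
    'a \<Rightarrow> ('a \<times> 'a \<Rightarrow> 'k) set" where
  "bc_incl R S r s n a = tens_class R S (\<lambda>p. \<Sum>i<n. dlt (a \<otimes>\<^bsub>R\<^esub> r i) (s i) p)"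

definition bc_cond :: "('k::field, 'a) module \<Rightarrow> 'k \<Rightarrow> ('a \<times> 'a \<Rightarrow> 'k) set \<Rightarrow> 'a" where
  "bc_cond R lam U = lam \<odot>\<^bsub>R\<^esub>
     finsum R (\<lambda>p. rep U p \<odot>\<^bsub>R\<^esub> (fst p \<otimes>\<^bsub>R\<^esub> snd p)) (supp (rep U))"

definition free_right_basis :: "('k::field, 'a) module \<Rightarrow> ('k, 'b) module \<Rightarrow> ('b \<Rightarrow> 'a) \<Rightarrow> 'a set \<Rightarrow> bool" where
  "free_right_basis R S \<iota> Bs \<longleftrightarrow> Bs \<subseteq> carrier R \<and>
     (\<forall>u\<in>carrier R. \<exists>!f. f \<in> Bs \<rightarrow>\<^sub>E carrier S \<and> finite {b\<in>Bs. f b \<noteq> \<zero>\<^bsub>S\<^esub>} \<and>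
        u = finsum R (\<lambda>b. b \<otimes>\<^bsub>R\<^esub> \<iota> (f b)) {b\<in>Bs. f b \<noteq> \<zero>\<^bsub>S\<^esub>})"

end

theory Submission
  imports Defs
begin


lemma supp_dlt[simp]: "supp (dlt a b :: _ \<Rightarrow> 'k::field) = {(a,b)}"
  by (auto simp: supp_def dlt_def)

lemma dlt_mult: "dlt a b p * G = (if p = (a,b) then G else 0)"
  by (simp add: dlt_def)

definition lin :: "('b \<Rightarrow> 'k) \<Rightarrow> ('b \<Rightarrow> 'k::field) \<Rightarrow> 'k" where
  "lin G F = (\<Sum>p\<in>supp F. F p * G p)"

lemma lin_super: "finite P \<Longrightarrow> supp F \<subseteq> P \<Longrightarrow> lin G F = (\<Sum>p\<in>P. F p * G p)"
  unfolding lin_def by (rule sum.mono_neutral_left) (auto simp: supp_def)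

lemma supp_add: "supp (\<lambda>p. F p + F' p :: 'k::field) \<subseteq> supp F \<union> supp F'"
  by (auto simp: supp_def)
lemma supp_smul: "supp (\<lambda>p. c * F p :: 'k::field) \<subseteq> supp F"
  by (auto simp: supp_def)
lemma supp_diff: "supp (\<lambda>p. F p - F' p :: 'k::field) \<subseteq> supp F \<union> supp F'"
  by (auto simp: supp_def)

lemma lin_add: "finite (supp F) \<Longrightarrow> finite (supp F') \<Longrightarrow>
   lin G (\<lambda>p. F p + F' p) = lin G F + lin G F'"
  using lin_super[of "supp F \<union> supp F'" "\<lambda>p. F p + F' p" G]
    lin_super[of "supp F \<union> supp F'" F G] lin_super[of "supp F \<union> supp F'" F' G] supp_add[of F F']
  by (simp add: distrib_right sum.distrib)

lemma lin_diff: "finite (supp F) \<Longrightarrow> finite (supp F') \<Longrightarrow>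
   lin G (\<lambda>p. F p - F' p) = lin G F - lin G F'"
  using lin_super[of "supp F \<union> supp F'" "\<lambda>p. F p - F' p" G]
    lin_super[of "supp F \<union> supp F'" F G] lin_super[of "supp F \<union> supp F'" F' G] supp_diff[of F F']
  by (simp add: left_diff_distrib sum_subtractf)

lemma lin_smul: "finite (supp F) \<Longrightarrow> lin G (\<lambda>p. c * F p) = c * lin G F"
  using lin_super[of "supp F" "\<lambda>p. c * F p" G] supp_smul[of c F]
  by (simp add: lin_def sum_distrib_left mult.assoc)

lemma lin_dlt[simp]: "lin G (dlt a b) = G (a,b)"
  by (simp add: lin_def dlt_mult)

definition dsum :: "'i set \<Rightarrow> ('i \<Rightarrow> 'k::field) \<Rightarrow> ('i \<Rightarrow> 'a) \<Rightarrow> ('i \<Rightarrow> 'a) \<Rightarrow> 'a \<times> 'a \<Rightarrow> 'k" where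
  "dsum I c a b = (\<lambda>p. \<Sum>i\<in>I. c i * dlt (a i) (b i) p)"

lemma supp_dsum: "supp (dsum I c a b) \<subseteq> (\<lambda>i. (a i, b i)) ` I"
proof
  fix p assume "p \<in> supp (dsum I c a b)"
  then show "p \<in> (\<lambda>i. (a i, b i)) ` I"
    by (auto simp: supp_def dsum_def dlt_def intro!: sum.neutral split: if_splits)
qed

lemma finite_supp_dsum: "finite I \<Longrightarrow> finite (supp (dsum I c a b))"
  by (rule finite_subset[OF supp_dsum]) simp


lemma lin_dsum: "finite I \<Longrightarrow> lin G (dsum I c a b) = (\<Sum>i\<in>I. c i * G (a i, b i))"
proof -
  assume I: "finite I"
  let ?P = "(\<lambda>i. (a i, b i)) ` I"
  have "lin G (dsum I c a b) = (\<Sum>p\<in>?P. dsum I c a b p * G p)"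
    by (intro lin_super finite_imageI I supp_dsum)
  also have "\<dots> = (\<Sum>p\<in>?P. \<Sum>i\<in>I. c i * (dlt (a i) (b i) p * G p))"
    by (simp only: dsum_def sum_distrib_right mult.assoc)
  also have "\<dots> = (\<Sum>i\<in>I. c i * (\<Sum>p\<in>?P. dlt (a i) (b i) p * G p))"
    by (subst sum.swap) (simp add: sum_distrib_left)
  also have "\<dots> = (\<Sum>i\<in>I. c i * G (a i, b i))"
    using I by (intro sum.cong refl) (simp add: dlt_mult)
  finally show ?thesis .
qed

lemma expand: "finite (supp f) \<Longrightarrow> f = dsum (supp f) f fst snd"
proof (rule ext)
  fix p assume fin: "finite (supp f)"
  have "dsum (supp f) f fst snd p = (\<Sum>q\<in>supp f. if q = p then f q else 0)"
    unfolding dsum_def by (intro sum.cong refl) (simp add: dlt_def)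
  also have "\<dots> = (if p \<in> supp f then f p else 0)" using fin by (rule sum.delta)
  also have "\<dots> = f p" by (simp add: supp_def)
  finally show "f p = dsum (supp f) f fst snd p" by simp
qed



lemma kring_simps[simp]: "carrier (kring::'k::field ring) = UNIV" "a \<oplus>\<^bsub>kring\<^esub> b = a + b"
  "a \<otimes>\<^bsub>kring\<^esub> b = a * b" "\<one>\<^bsub>kring\<^esub> = 1" "\<zero>\<^bsub>kring\<^esub> = 0"
  by (simp_all add: kring_def)

locale bc =
  fixes R :: "('k::field, 'a) module" and S :: "'a set" and E :: "'a \<Rightarrow> 'a"
    and r s :: "nat \<Rightarrow> 'a" and n :: nat and lam :: 'k
  assumes alg: "kalg R"
    and sub: "subalg S R"
    and E_into: "\<forall>m\<in>carrier R. E m \<in> S"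
    and E_add: "\<forall>a\<in>carrier R. \<forall>b\<in>carrier R. E (a \<oplus>\<^bsub>R\<^esub> b) = E a \<oplus>\<^bsub>R\<^esub> E b"
    and E_bimod: "\<forall>a\<in>S. \<forall>m\<in>carrier R.
                    E (a \<otimes>\<^bsub>R\<^esub> m) = a \<otimes>\<^bsub>R\<^esub> E m \<and> E (m \<otimes>\<^bsub>R\<^esub> a) = E m \<otimes>\<^bsub>R\<^esub> a"
    and rs_in: "\<forall>i<n. r i \<in> carrier R \<and> s i \<in> carrier R"
    and dual1: "\<forall>m\<in>carrier R. finsum R (\<lambda>i. E (m \<otimes>\<^bsub>R\<^esub> r i) \<otimes>\<^bsub>R\<^esub> s i) {..<n} = m"
    and dual2: "\<forall>m\<in>carrier R. finsum R (\<lambda>i. r i \<otimes>\<^bsub>R\<^esub> E (s i \<otimes>\<^bsub>R\<^esub> m)) {..<n} = m"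
    and E_one: "E \<one>\<^bsub>R\<^esub> = \<one>\<^bsub>R\<^esub>"
    and lam_nz: "lam \<noteq> 0"
    and rs_sum: "finsum R (\<lambda>i. r i \<otimes>\<^bsub>R\<^esub> s i) {..<n} = inverse lam \<odot>\<^bsub>R\<^esub> \<one>\<^bsub>R\<^esub>"
begin

sublocale Rr: ring R using alg by (simp add: kalg_def)
sublocale Rm: module kring R using alg by (simp add: kalg_def)

lemma cring_k: "cring (kring :: 'k ring)" using Rm.is_cring .

lemma sm_closed[simp,intro]: "a \<in> carrier R \<Longrightarrow> c \<odot>\<^bsub>R\<^esub> a \<in> carrier R"
  using Rm.smult_closed by simp
lemma sm_ldistr: "a \<in> carrier R \<Longrightarrow> (c + d) \<odot>\<^bsub>R\<^esub> a = c \<odot>\<^bsub>R\<^esub> a \<oplus>\<^bsub>R\<^esub> d \<odot>\<^bsub>R\<^esub> a"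
  using Rm.smult_l_distr[of c d a] by simp
lemma sm_rdistr: "a \<in> carrier R \<Longrightarrow> b \<in> carrier R \<Longrightarrow> c \<odot>\<^bsub>R\<^esub> (a \<oplus>\<^bsub>R\<^esub> b) = c \<odot>\<^bsub>R\<^esub> a \<oplus>\<^bsub>R\<^esub> c \<odot>\<^bsub>R\<^esub> b"
  using Rm.smult_r_distr[of c a b] by simp
lemma sm_assoc: "a \<in> carrier R \<Longrightarrow> (c * d) \<odot>\<^bsub>R\<^esub> a = c \<odot>\<^bsub>R\<^esub> (d \<odot>\<^bsub>R\<^esub> a)"
  using Rm.smult_assoc1[of c d a] by simp
lemma sm_one[simp]: "a \<in> carrier R \<Longrightarrow> (1::'k) \<odot>\<^bsub>R\<^esub> a = a"
  using Rm.smult_one[of a] by simp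
lemma sm_zero[simp]: "a \<in> carrier R \<Longrightarrow> (0::'k) \<odot>\<^bsub>R\<^esub> a = \<zero>\<^bsub>R\<^esub>"
  using Rm.smult_l_null[of a] by simp
lemma sm_zero2[simp]: "c \<odot>\<^bsub>R\<^esub> \<zero>\<^bsub>R\<^esub> = \<zero>\<^bsub>R\<^esub>"
  using Rm.smult_r_null[of c] by simp
lemma sm_mult_l: "a \<in> carrier R \<Longrightarrow> b \<in> carrier R \<Longrightarrow> (c \<odot>\<^bsub>R\<^esub> a) \<otimes>\<^bsub>R\<^esub> b = c \<odot>\<^bsub>R\<^esub> (a \<otimes>\<^bsub>R\<^esub> b)"
  using alg by (simp add: kalg_def)
lemma sm_mult_r: "a \<in> carrier R \<Longrightarrow> b \<in> carrier R \<Longrightarrow> a \<otimes>\<^bsub>R\<^esub> (c \<odot>\<^bsub>R\<^esub> b) = c \<odot>\<^bsub>R\<^esub> (a \<otimes>\<^bsub>R\<^esub> b)"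
  using alg by (simp add: kalg_def)

lemma S_sub: "S \<subseteq> carrier R" using sub by (simp add: subalg_def)
lemma S_one: "\<one>\<^bsub>R\<^esub> \<in> S" using sub by (simp add: subalg_def)
lemma S_sm: "a \<in> S \<Longrightarrow> c \<odot>\<^bsub>R\<^esub> a \<in> S" using sub by (simp add: subalg_def)

lemma E_S: "m \<in> carrier R \<Longrightarrow> E m \<in> S" using E_into by blast
lemma E_car[simp,intro]: "m \<in> carrier R \<Longrightarrow> E m \<in> carrier R" using E_S S_sub by blast
lemma E_plus: "a \<in> carrier R \<Longrightarrow> b \<in> carrier R \<Longrightarrow> E (a \<oplus>\<^bsub>R\<^esub> b) = E a \<oplus>\<^bsub>R\<^esub> E b"
  using E_add by blast
lemma E_left: "a \<in> S \<Longrightarrow> m \<in> carrier R \<Longrightarrow> E (a \<otimes>\<^bsub>R\<^esub> m) = a \<otimes>\<^bsub>R\<^esub> E m"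
  using E_bimod by blast
lemma E_right: "a \<in> S \<Longrightarrow> m \<in> carrier R \<Longrightarrow> E (m \<otimes>\<^bsub>R\<^esub> a) = E m \<otimes>\<^bsub>R\<^esub> a"
  using E_bimod by blast
lemma E_zero[simp]: "E \<zero>\<^bsub>R\<^esub> = \<zero>\<^bsub>R\<^esub>"
proof -
  have "E \<zero>\<^bsub>R\<^esub> = E \<zero>\<^bsub>R\<^esub> \<oplus>\<^bsub>R\<^esub> E \<zero>\<^bsub>R\<^esub>" using E_plus[of "\<zero>\<^bsub>R\<^esub>" "\<zero>\<^bsub>R\<^esub>"] by simp
  then show ?thesis using Rr.add.l_cancel_one[of "E \<zero>\<^bsub>R\<^esub>" "E \<zero>\<^bsub>R\<^esub>"] by simp
qed
lemma E_sm: "m \<in> carrier R \<Longrightarrow> E (c \<odot>\<^bsub>R\<^esub> m) = c \<odot>\<^bsub>R\<^esub> E m"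
proof -
  assume m: "m \<in> carrier R"
  have c1: "c \<odot>\<^bsub>R\<^esub> \<one>\<^bsub>R\<^esub> \<in> S" using S_sm S_one by blast
  have "c \<odot>\<^bsub>R\<^esub> m = (c \<odot>\<^bsub>R\<^esub> \<one>\<^bsub>R\<^esub>) \<otimes>\<^bsub>R\<^esub> m" using m by (simp add: sm_mult_l)
  then have "E (c \<odot>\<^bsub>R\<^esub> m) = (c \<odot>\<^bsub>R\<^esub> \<one>\<^bsub>R\<^esub>) \<otimes>\<^bsub>R\<^esub> E m" using E_left[OF c1 m] by simp
  then show ?thesis using m by (simp add: sm_mult_l)
qed
lemma r_in[simp]: "i < n \<Longrightarrow> r i \<in> carrier R" using rs_in by blast
lemma s_in[simp]: "i < n \<Longrightarrow> s i \<in> carrier R" using rs_in by blast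

end


context bc begin

abbreviation "V \<equiv> tens_rel R S"
abbreviation "FS \<equiv> fsums R"
abbreviation "cls \<equiv> tens_class R S"
abbreviation "R1 \<equiv> basic_constr R S E r s n"

definition eqv :: "('a \<times> 'a \<Rightarrow> 'k) \<Rightarrow> ('a \<times> 'a \<Rightarrow> 'k) \<Rightarrow> bool" where
  "eqv f g \<longleftrightarrow> (\<lambda>p. f p - g p) \<in> V"

lemma FS_iff: "f \<in> FS \<longleftrightarrow> finite (supp f) \<and> supp f \<subseteq> carrier R \<times> carrier R"
  by (simp add: fsums_def)

lemma FS_zero[simp,intro]: "(\<lambda>_. 0) \<in> FS" by (simp add: fsums_def supp_def)
lemma FS_add[intro]: "f \<in> FS \<Longrightarrow> g \<in> FS \<Longrightarrow> (\<lambda>p. f p + g p) \<in> FS"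
  unfolding FS_iff using supp_add[of f g] by (meson finite_Un finite_subset le_sup_iff order_trans)
lemma FS_diff[intro]: "f \<in> FS \<Longrightarrow> g \<in> FS \<Longrightarrow> (\<lambda>p. f p - g p) \<in> FS"
  unfolding FS_iff using supp_diff[of f g] by (meson finite_Un finite_subset le_sup_iff order_trans)
lemma FS_smul[intro]: "f \<in> FS \<Longrightarrow> (\<lambda>p. c * f p) \<in> FS"
  unfolding FS_iff using supp_smul[of c f] by (meson finite_subset order_trans)
lemma FS_dlt[intro]: "a \<in> carrier R \<Longrightarrow> b \<in> carrier R \<Longrightarrow> dlt a b \<in> FS"
  by (simp add: FS_iff)
lemma FS_sum[intro]: "finite I \<Longrightarrow> (\<And>i. i \<in> I \<Longrightarrow> F i \<in> FS) \<Longrightarrow> (\<lambda>p. \<Sum>i\<in>I. F i p) \<in> FS"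
proof (induction I rule: finite_induct)
  case empty then show ?case by simp
next
  case (insert x I)
  have "(\<lambda>p. \<Sum>i\<in>insert x I. F i p) = (\<lambda>p. F x p + (\<Sum>i\<in>I. F i p))"
    using insert by simp
  then show ?case using insert by auto
qed
lemma FS_dsum[intro]: "finite I \<Longrightarrow> (\<And>i. i \<in> I \<Longrightarrow> a i \<in> carrier R \<and> b i \<in> carrier R) \<Longrightarrow> dsum I c a b \<in> FS"
  unfolding dsum_def by (intro FS_sum FS_smul FS_dlt) auto

lemma FS_fin: "f \<in> FS \<Longrightarrow> finite (supp f)" by (simp add: FS_iff)

lemma V_FS: "h \<in> V \<Longrightarrow> h \<in> FS"
proof (induction rule: tens_rel.induct)
  case zero then show ?case by auto
next
  case (add f g) then show ?case by auto
next
  case (smul f c) then show ?case by auto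
next
  case (addl a a' b) then show ?case by (intro FS_diff FS_dlt) auto
next
  case (addr a b b') then show ?case by (intro FS_diff FS_dlt) auto
next
  case (scl a b c) then show ?case by (intro FS_diff FS_dlt FS_smul) auto
next
  case (scr a b c) then show ?case by (intro FS_diff FS_dlt FS_smul) auto
next
  case (bal a b s) then show ?case using S_sub by (intro FS_diff FS_dlt) auto
qed

lemma V_zero[intro]: "(\<lambda>_. 0) \<in> V" by (rule tens_rel.zero)
lemma V_add[intro]: "f \<in> V \<Longrightarrow> g \<in> V \<Longrightarrow> (\<lambda>p. f p + g p) \<in> V" by (rule tens_rel.add)
lemma V_smul[intro]: "f \<in> V \<Longrightarrow> (\<lambda>p. c * f p) \<in> V" by (rule tens_rel.smul)
lemma V_neg[intro]: "f \<in> V \<Longrightarrow> (\<lambda>p. - f p) \<in> V"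
  using V_smul[of f "-1"] by simp
lemma V_diff[intro]: "f \<in> V \<Longrightarrow> g \<in> V \<Longrightarrow> (\<lambda>p. f p - g p) \<in> V"
  using V_add[of f "\<lambda>p. - g p"] V_neg[of g] by simp
lemma V_sum[intro]: "finite I \<Longrightarrow> (\<And>i. i \<in> I \<Longrightarrow> F i \<in> V) \<Longrightarrow> (\<lambda>p. \<Sum>i\<in>I. F i p) \<in> V"
proof (induction I rule: finite_induct)
  case empty then show ?case by (simp add: V_zero)
next
  case (insert x I)
  have "(\<lambda>p. \<Sum>i\<in>insert x I. F i p) = (\<lambda>p. F x p + (\<Sum>i\<in>I. F i p))"
    using insert by simp
  then show ?case using insert by auto
qed
lemma V_eq0: "f = (\<lambda>_. 0) \<Longrightarrow> f \<in> V" by auto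

lemma eqv_refl[intro]: "eqv f f" by (simp add: eqv_def V_zero)
lemma eqv_sym: "eqv f g \<Longrightarrow> eqv g f"
  unfolding eqv_def using V_neg by fastforce
lemma eqv_trans: "eqv f g \<Longrightarrow> eqv g h \<Longrightarrow> eqv f h"
  unfolding eqv_def using V_add[of "\<lambda>p. f p - g p" "\<lambda>p. g p - h p"] by simp
lemma eqv_add: "eqv f g \<Longrightarrow> eqv f' g' \<Longrightarrow> eqv (\<lambda>p. f p + f' p) (\<lambda>p. g p + g' p)"
  unfolding eqv_def using V_add[of "\<lambda>p. f p - g p" "\<lambda>p. f' p - g' p"] by (simp add: algebra_simps)
lemma eqv_diff: "eqv f g \<Longrightarrow> eqv f' g' \<Longrightarrow> eqv (\<lambda>p. f p - f' p) (\<lambda>p. g p - g' p)"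
  unfolding eqv_def using V_diff[of "\<lambda>p. f p - g p" "\<lambda>p. f' p - g' p"] by (simp add: algebra_simps)
lemma eqv_smul: "eqv f g \<Longrightarrow> eqv (\<lambda>p. c * f p) (\<lambda>p. c * g p)"
  unfolding eqv_def using V_smul[of "\<lambda>p. f p - g p" c] by (simp add: algebra_simps)
lemma eqv_sum: "finite I \<Longrightarrow> (\<And>i. i \<in> I \<Longrightarrow> eqv (F i) (G i)) \<Longrightarrow> eqv (\<lambda>p. \<Sum>i\<in>I. F i p) (\<lambda>p. \<Sum>i\<in>I. G i p)"
  unfolding eqv_def using V_sum[of I "\<lambda>i p. F i p - G i p"] by (simp add: sum_subtractf)
lemma eqv_V: "h \<in> V \<Longrightarrow> eqv (\<lambda>p. f p + h p) f"
  unfolding eqv_def by simp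
lemma eqv_eq: "f = g \<Longrightarrow> eqv f g" by auto

lemma cls_self: "f \<in> FS \<Longrightarrow> f \<in> cls f"
  by (simp add: tens_class_def V_zero)
lemma cls_eq: "f \<in> FS \<Longrightarrow> g \<in> FS \<Longrightarrow> cls f = cls g \<longleftrightarrow> eqv f g"
proof
  assume f: "f \<in> FS" and g: "g \<in> FS"
  { assume "cls f = cls g"
    then have "g \<in> cls f" using cls_self[OF g] by simp
    then show "eqv f g" by (simp add: tens_class_def eqv_def) }
  { assume e: "eqv f g"
    show "cls f = cls g"
      unfolding tens_class_def using e eqv_trans eqv_sym unfolding eqv_def[symmetric] by blast }
qed
lemma cls_eqI: "f \<in> FS \<Longrightarrow> g \<in> FS \<Longrightarrow> eqv f g \<Longrightarrow> cls f = cls g"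
  using cls_eq by blast

lemma rep_cls: "f \<in> FS \<Longrightarrow> rep (cls f) \<in> FS \<and> eqv f (rep (cls f))"
proof -
  assume f: "f \<in> FS"
  then have "rep (cls f) \<in> cls f" unfolding rep_def using cls_self by (metis someI_ex)
  then show ?thesis by (simp add: tens_class_def eqv_def)
qed

lemma car1: "carrier R1 = cls ` FS"
  by (simp add: basic_constr_def tens_carrier_def)
lemma car1E: "U \<in> carrier R1 \<Longrightarrow> (\<And>f. f \<in> FS \<Longrightarrow> U = cls f \<Longrightarrow> P) \<Longrightarrow> P"
  using car1 by blast
lemma cls_car[intro,simp]: "f \<in> FS \<Longrightarrow> cls f \<in> carrier R1"
  using car1 by blast

lemma add1: "f \<in> FS \<Longrightarrow> g \<in> FS \<Longrightarrow> cls f \<oplus>\<^bsub>R1\<^esub> cls g = cls (\<lambda>p. f p + g p)"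
proof -
  assume f: "f \<in> FS" and g: "g \<in> FS"
  have a: "rep (cls f) \<in> FS" "eqv f (rep (cls f))" using rep_cls[OF f] by auto
  have b: "rep (cls g) \<in> FS" "eqv g (rep (cls g))" using rep_cls[OF g] by auto
  have "cls (\<lambda>p. rep (cls f) p + rep (cls g) p) = cls (\<lambda>p. f p + g p)"
    apply (rule cls_eqI)
    using a b f g apply (blast intro: FS_add)
    using f g apply (blast intro: FS_add)
    by (rule eqv_sym, rule eqv_add) (use a b in auto)
  then show ?thesis by (simp add: basic_constr_def)
qed
lemma sm1: "f \<in> FS \<Longrightarrow> c \<odot>\<^bsub>R1\<^esub> cls f = cls (\<lambda>p. c * f p)"
proof -
  assume f: "f \<in> FS"
  have a: "rep (cls f) \<in> FS" "eqv f (rep (cls f))" using rep_cls[OF f] by auto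
  have "cls (\<lambda>p. c * rep (cls f) p) = cls (\<lambda>p. c * f p)"
    apply (rule cls_eqI)
    using a f apply (blast intro: FS_smul)
    using f apply (blast intro: FS_smul)
    by (rule eqv_sym, rule eqv_smul) (use a in auto)
  then show ?thesis by (simp add: basic_constr_def)
qed
lemma zero1: "\<zero>\<^bsub>R1\<^esub> = cls (\<lambda>_. 0)"
  by (simp add: basic_constr_def)

end


lemma lin_gen3: "lin G (\<lambda>p. dlt x1 y1 p - dlt x2 y2 p - dlt x3 y3 p) = G (x1,y1) - G (x2,y2) - G (x3,y3)"
  by (subst lin_diff, simp add: finite_subset[OF supp_diff], simp, subst lin_diff, simp_all)
lemma lin_gen2: "lin G (\<lambda>p. dlt x1 y1 p - c * dlt x2 y2 p) = G (x1,y1) - c * G (x2,y2)"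
  by (subst lin_diff, simp, simp add: finite_subset[OF supp_smul], subst lin_smul, simp_all)
lemma lin_gen2': "lin G (\<lambda>p. dlt x1 y1 p - dlt x2 y2 p) = G (x1,y1) - G (x2,y2)"
  by (subst lin_diff, simp_all)
lemma lin_zero[simp]: "lin G (\<lambda>_. 0) = 0" by (simp add: lin_def supp_def)

context bc begin

abbreviation "mm \<equiv> bc_mult R E"

definition K :: "'a \<times> 'a \<Rightarrow> 'a \<times> 'a \<Rightarrow> 'a \<times> 'a \<Rightarrow> 'k" where
  "K p q = dlt (fst p \<otimes>\<^bsub>R\<^esub> E (snd p \<otimes>\<^bsub>R\<^esub> fst q)) (snd q)"

lemma mm_lin: "mm f g t = lin (\<lambda>p. lin (\<lambda>q. K p q t) g) f"
  unfolding bc_mult_def lin_def K_def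
  by (simp only: sum_distrib_left mult.assoc)

lemma mm_lin2: "mm f g t = lin (\<lambda>q. lin (\<lambda>p. K p q t) f) g"
  unfolding bc_mult_def lin_def K_def
  by (subst sum.swap) (simp only: sum_distrib_left mult.assoc mult.left_commute)

lemma dsum_cart: "dsum (I \<times> J) c a b t = (\<Sum>i\<in>I. \<Sum>j\<in>J. c (i,j) * dlt (a (i,j)) (b (i,j)) t)"
  unfolding dsum_def by (simp add: sum.cartesian_product)

lemma mm_dsum: "finite I \<Longrightarrow> finite J \<Longrightarrow> mm (dsum I c a b) (dsum J d a' b') =
   dsum (I \<times> J) (\<lambda>(i,j). c i * d j) (\<lambda>(i,j). a i \<otimes>\<^bsub>R\<^esub> E (b i \<otimes>\<^bsub>R\<^esub> a' j)) (\<lambda>(i,j). b' j)"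
proof (rule ext)
  fix t assume I: "finite I" and J: "finite J"
  have "mm (dsum I c a b) (dsum J d a' b') t = (\<Sum>i\<in>I. c i * (\<Sum>j\<in>J. d j * K (a i, b i) (a' j, b' j) t))"
    by (simp only: mm_lin lin_dsum I J)
  also have "\<dots> = (\<Sum>i\<in>I. \<Sum>j\<in>J. c i * d j * dlt (a i \<otimes>\<^bsub>R\<^esub> E (b i \<otimes>\<^bsub>R\<^esub> a' j)) (b' j) t)"
    by (simp only: sum_distrib_left mult.assoc K_def fst_conv snd_conv)
  finally show "mm (dsum I c a b) (dsum J d a' b') t = dsum (I \<times> J) (\<lambda>(i,j). c i * d j) (\<lambda>(i,j). a i \<otimes>\<^bsub>R\<^esub> E (b i \<otimes>\<^bsub>R\<^esub> a' j)) (\<lambda>(i,j). b' j) t"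
    by (simp only: dsum_cart split_conv)
qed

lemma FS_mem: "f \<in> FS \<Longrightarrow> (a,b) \<in> supp f \<Longrightarrow> a \<in> carrier R \<and> b \<in> carrier R"
  by (auto simp: FS_iff)
lemma FS_mem': "f \<in> FS \<Longrightarrow> p \<in> supp f \<Longrightarrow> fst p \<in> carrier R \<and> snd p \<in> carrier R"
  by (auto simp: FS_iff)

lemma mm_FS: "f \<in> FS \<Longrightarrow> g \<in> FS \<Longrightarrow> mm f g \<in> FS"
proof -
  assume f: "f \<in> FS" and g: "g \<in> FS"
  have ff: "finite (supp f)" "finite (supp g)" using f g FS_fin by auto
  have "mm f g = mm (dsum (supp f) f fst snd) (dsum (supp g) g fst snd)"
    using expand[OF ff(1)] expand[OF ff(2)] by simp
  also have "\<dots> = dsum (supp f \<times> supp g) (\<lambda>(i,j). f i * g j) (\<lambda>(i,j). fst i \<otimes>\<^bsub>R\<^esub> E (snd i \<otimes>\<^bsub>R\<^esub> fst j)) (\<lambda>(i,j). snd j)"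
    using ff by (rule mm_dsum)
  also have "\<dots> \<in> FS"
    using f g by (intro FS_dsum finite_cartesian_product ff) (auto dest!: FS_mem)
  finally show ?thesis .
qed

lemma mm_addl: "finite (supp f) \<Longrightarrow> finite (supp f') \<Longrightarrow> mm (\<lambda>p. f p + f' p) g = (\<lambda>t. mm f g t + mm f' g t)"
  by (rule ext) (simp only: mm_lin lin_add)
lemma mm_diffl: "finite (supp f) \<Longrightarrow> finite (supp f') \<Longrightarrow> mm (\<lambda>p. f p - f' p) g = (\<lambda>t. mm f g t - mm f' g t)"
  by (rule ext) (simp only: mm_lin lin_diff)
lemma mm_smull: "finite (supp f) \<Longrightarrow> mm (\<lambda>p. c * f p) g = (\<lambda>t. c * mm f g t)"
  by (rule ext) (simp only: mm_lin lin_smul)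
lemma mm_addr: "finite (supp g) \<Longrightarrow> finite (supp g') \<Longrightarrow> mm f (\<lambda>p. g p + g' p) = (\<lambda>t. mm f g t + mm f g' t)"
  by (rule ext) (simp only: mm_lin2 lin_add)
lemma mm_diffr: "finite (supp g) \<Longrightarrow> finite (supp g') \<Longrightarrow> mm f (\<lambda>p. g p - g' p) = (\<lambda>t. mm f g t - mm f g' t)"
  by (rule ext) (simp only: mm_lin2 lin_diff)
lemma mm_smulr: "finite (supp g) \<Longrightarrow> mm f (\<lambda>p. c * g p) = (\<lambda>t. c * mm f g t)"
  by (rule ext) (simp only: mm_lin2 lin_smul)
lemma mm_zerol: "mm (\<lambda>_. 0) g = (\<lambda>_. 0)"
  by (rule ext) (simp only: mm_lin lin_zero)
lemma mm_zeror: "mm f (\<lambda>_. 0) = (\<lambda>_. 0)"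
  by (rule ext) (simp only: mm_lin2 lin_zero)

lemma V_lincomb: "finite Q \<Longrightarrow> (\<And>q. q \<in> Q \<Longrightarrow> F q \<in> V) \<Longrightarrow> (\<lambda>t. \<Sum>q\<in>Q. c q * F q t) \<in> V"
  by (intro V_sum V_smul)

end


context bc begin

lemma mm_via: "mm h g = (\<lambda>t. \<Sum>q\<in>supp g. g q * lin (\<lambda>p. K p q t) h)"
  by (rule ext) (simp only: mm_lin2 lin_def)
lemma mm_via2: "mm f h = (\<lambda>t. \<Sum>p\<in>supp f. f p * lin (\<lambda>q. K p q t) h)"
  by (rule ext) (simp only: mm_lin lin_def)

lemma V_mm_left: assumes "h \<in> V" "g \<in> FS" shows "mm h g \<in> V"
  using assms
proof (induction rule: tens_rel.induct)
  case zero then show ?case by (simp add: mm_zerol V_zero)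
next
  case (add f f')
  then show ?case using V_FS[OF add(1)] V_FS[OF add(2)]
    by (simp add: mm_addl FS_fin V_add)
next
  case (smul f c)
  then show ?case using V_FS[OF smul(1)] by (simp add: mm_smull FS_fin V_smul)
next
  case (addl a a' b)
  have fg: "finite (supp g)" using addl FS_fin by auto
  show ?case unfolding mm_via lin_gen3
  proof (rule V_lincomb[OF fg])
    fix q assume q: "q \<in> supp g"
    then have q1: "fst q \<in> carrier R" "snd q \<in> carrier R" using addl FS_mem' by auto
    then show "(\<lambda>t. K (a \<oplus>\<^bsub>R\<^esub> a', b) q t - K (a, b) q t - K (a', b) q t) \<in> V"
      unfolding K_def fst_conv snd_conv using addl
      by (simp add: Rr.l_distr tens_rel.addl)
  qed
next
  case (addr a b b')
  have fg: "finite (supp g)" using addr FS_fin by auto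
  show ?case unfolding mm_via lin_gen3
  proof (rule V_lincomb[OF fg])
    fix q assume q: "q \<in> supp g"
    then have q1: "fst q \<in> carrier R" "snd q \<in> carrier R" using addr FS_mem' by auto
    then show "(\<lambda>t. K (a, b \<oplus>\<^bsub>R\<^esub> b') q t - K (a, b) q t - K (a, b') q t) \<in> V"
      unfolding K_def fst_conv snd_conv using addr
      by (simp add: Rr.l_distr Rr.r_distr E_plus tens_rel.addl)
  qed
next
  case (scl a b c)
  have fg: "finite (supp g)" using scl FS_fin by auto
  show ?case unfolding mm_via lin_gen2
  proof (rule V_lincomb[OF fg])
    fix q assume q: "q \<in> supp g"
    then have q1: "fst q \<in> carrier R" "snd q \<in> carrier R" using scl FS_mem' by auto
    then show "(\<lambda>t. K (c \<odot>\<^bsub>R\<^esub> a, b) q t - c * K (a, b) q t) \<in> V"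
      unfolding K_def fst_conv snd_conv using scl
      by (simp add: sm_mult_l tens_rel.scl)
  qed
next
  case (scr a b c)
  have fg: "finite (supp g)" using scr FS_fin by auto
  show ?case unfolding mm_via lin_gen2
  proof (rule V_lincomb[OF fg])
    fix q assume q: "q \<in> supp g"
    then have q1: "fst q \<in> carrier R" "snd q \<in> carrier R" using scr FS_mem' by auto
    then show "(\<lambda>t. K (a, c \<odot>\<^bsub>R\<^esub> b) q t - c * K (a, b) q t) \<in> V"
      unfolding K_def fst_conv snd_conv using scr
      by (simp add: sm_mult_l sm_mult_r E_sm tens_rel.scl)
  qed
next
  case (bal a b s')
  have fg: "finite (supp g)" using bal FS_fin by auto
  have s': "s' \<in> carrier R" using bal S_sub by auto
  show ?case unfolding mm_via lin_gen2'
  proof (rule V_lincomb[OF fg])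
    fix q assume q: "q \<in> supp g"
    then have q1: "fst q \<in> carrier R" "snd q \<in> carrier R" using bal FS_mem' by auto
    then show "(\<lambda>t. K (a \<otimes>\<^bsub>R\<^esub> s', b) q t - K (a, s' \<otimes>\<^bsub>R\<^esub> b) q t) \<in> V"
      unfolding K_def fst_conv snd_conv using bal s'
      by (intro V_eq0) (simp add: Rr.m_assoc E_left)
  qed
qed

lemma V_mm_right: assumes "h \<in> V" "f \<in> FS" shows "mm f h \<in> V"
  using assms
proof (induction rule: tens_rel.induct)
  case zero then show ?case by (simp add: mm_zeror V_zero)
next
  case (add g g')
  then show ?case using V_FS[OF add(1)] V_FS[OF add(2)]
    by (simp add: mm_addr FS_fin V_add)
next
  case (smul g c)
  then show ?case using V_FS[OF smul(1)] by (simp add: mm_smulr FS_fin V_smul)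
next
  case (addl a a' b)
  have fg: "finite (supp f)" using addl FS_fin by auto
  show ?case unfolding mm_via2 lin_gen3
  proof (rule V_lincomb[OF fg])
    fix p assume "p \<in> supp f"
    then have "fst p \<in> carrier R" "snd p \<in> carrier R" using addl FS_mem' by auto
    then show "(\<lambda>t. K p (a \<oplus>\<^bsub>R\<^esub> a', b) t - K p (a, b) t - K p (a', b) t) \<in> V"
      unfolding K_def fst_conv snd_conv using addl
      by (simp add: Rr.l_distr Rr.r_distr E_plus tens_rel.addl)
  qed
next
  case (addr a b b')
  have fg: "finite (supp f)" using addr FS_fin by auto
  show ?case unfolding mm_via2 lin_gen3
  proof (rule V_lincomb[OF fg])
    fix p assume "p \<in> supp f"
    then have "fst p \<in> carrier R" "snd p \<in> carrier R" using addr FS_mem' by auto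
    then show "(\<lambda>t. K p (a, b \<oplus>\<^bsub>R\<^esub> b') t - K p (a, b) t - K p (a, b') t) \<in> V"
      unfolding K_def fst_conv snd_conv using addr
      by (simp add: tens_rel.addr)
  qed
next
  case (scl a b c)
  have fg: "finite (supp f)" using scl FS_fin by auto
  show ?case unfolding mm_via2 lin_gen2
  proof (rule V_lincomb[OF fg])
    fix p assume "p \<in> supp f"
    then have "fst p \<in> carrier R" "snd p \<in> carrier R" using scl FS_mem' by auto
    then show "(\<lambda>t. K p (c \<odot>\<^bsub>R\<^esub> a, b) t - c * K p (a, b) t) \<in> V"
      unfolding K_def fst_conv snd_conv using scl
      by (simp add: sm_mult_r E_sm tens_rel.scl)
  qed
next
  case (scr a b c)
  have fg: "finite (supp f)" using scr FS_fin by auto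
  show ?case unfolding mm_via2 lin_gen2
  proof (rule V_lincomb[OF fg])
    fix p assume "p \<in> supp f"
    then have "fst p \<in> carrier R" "snd p \<in> carrier R" using scr FS_mem' by auto
    then show "(\<lambda>t. K p (a, c \<odot>\<^bsub>R\<^esub> b) t - c * K p (a, b) t) \<in> V"
      unfolding K_def fst_conv snd_conv using scr
      by (simp add: tens_rel.scr)
  qed
next
  case (bal a b s')
  have fg: "finite (supp f)" using bal FS_fin by auto
  have s': "s' \<in> carrier R" using bal S_sub by auto
  show ?case unfolding mm_via2 lin_gen2'
  proof (rule V_lincomb[OF fg])
    fix p assume "p \<in> supp f"
    then have p: "fst p \<in> carrier R" "snd p \<in> carrier R" using bal FS_mem' by auto
    have e: "fst p \<otimes>\<^bsub>R\<^esub> E (snd p \<otimes>\<^bsub>R\<^esub> (a \<otimes>\<^bsub>R\<^esub> s')) = (fst p \<otimes>\<^bsub>R\<^esub> E (snd p \<otimes>\<^bsub>R\<^esub> a)) \<otimes>\<^bsub>R\<^esub> s'"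
      using p bal s' by (simp add: Rr.m_assoc[symmetric] E_right)
    show "(\<lambda>t. K p (a \<otimes>\<^bsub>R\<^esub> s', b) t - K p (a, s' \<otimes>\<^bsub>R\<^esub> b) t) \<in> V"
      unfolding K_def fst_conv snd_conv e using bal p
      by (intro tens_rel.bal) auto
  qed
qed

lemma mm_eqv: "f \<in> FS \<Longrightarrow> f' \<in> FS \<Longrightarrow> g \<in> FS \<Longrightarrow> g' \<in> FS \<Longrightarrow> eqv f f' \<Longrightarrow> eqv g g' \<Longrightarrow>
   eqv (mm f g) (mm f' g')"
proof -
  assume f: "f \<in> FS" and f': "f' \<in> FS" and g: "g \<in> FS" and g': "g' \<in> FS"
    and e1: "eqv f f'" and e2: "eqv g g'"
  have a: "mm (\<lambda>p. f p - f' p) g \<in> V" using e1 g by (intro V_mm_left) (simp add: eqv_def)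
  have b: "mm f' (\<lambda>p. g p - g' p) \<in> V" using e2 f' by (intro V_mm_right) (simp add: eqv_def)
  have "(\<lambda>t. mm f g t - mm f' g' t) = (\<lambda>t. mm (\<lambda>p. f p - f' p) g t + mm f' (\<lambda>p. g p - g' p) t)"
    using f f' g g' by (simp add: mm_diffl mm_diffr FS_fin)
  then show ?thesis unfolding eqv_def using V_add[OF a b] by simp
qed

lemma mul1: "f \<in> FS \<Longrightarrow> g \<in> FS \<Longrightarrow> cls f \<otimes>\<^bsub>R1\<^esub> cls g = cls (mm f g)"
proof -
  assume f: "f \<in> FS" and g: "g \<in> FS"
  have a: "rep (cls f) \<in> FS" "eqv f (rep (cls f))" using rep_cls[OF f] by auto
  have b: "rep (cls g) \<in> FS" "eqv g (rep (cls g))" using rep_cls[OF g] by auto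
  have "cls (mm (rep (cls f)) (rep (cls g))) = cls (mm f g)"
    apply (rule cls_eqI)
    using a b apply (blast intro: mm_FS)
    using f g apply (blast intro: mm_FS)
    by (rule eqv_sym, rule mm_eqv) (use a b f g in auto)
  then show ?thesis by (simp add: basic_constr_def)
qed

end


context bc begin

lemma mm_expand: "f \<in> FS \<Longrightarrow> g \<in> FS \<Longrightarrow> mm f g =
  dsum (supp f \<times> supp g) (\<lambda>(i,j). f i * g j) (\<lambda>(i,j). fst i \<otimes>\<^bsub>R\<^esub> E (snd i \<otimes>\<^bsub>R\<^esub> fst j)) (\<lambda>(i,j). snd j)"
proof -
  assume f: "f \<in> FS" and g: "g \<in> FS"
  have ff: "finite (supp f)" "finite (supp g)" using f g FS_fin by auto
  have "mm f g = mm (dsum (supp f) f fst snd) (dsum (supp g) g fst snd)"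
    using expand[OF ff(1)] expand[OF ff(2)] by simp
  also have "\<dots> = dsum (supp f \<times> supp g) (\<lambda>(i,j). f i * g j) (\<lambda>(i,j). fst i \<otimes>\<^bsub>R\<^esub> E (snd i \<otimes>\<^bsub>R\<^esub> fst j)) (\<lambda>(i,j). snd j)"
    using ff by (rule mm_dsum)
  finally show ?thesis .
qed

lemma mm_assoc: assumes f: "f \<in> FS" and g: "g \<in> FS" and h: "h \<in> FS"
  shows "mm (mm f g) h = mm f (mm g h)"
proof (rule ext)
  fix t
  have ff: "finite (supp f)" "finite (supp g)" "finite (supp h)" using f g h FS_fin by auto
  let ?X = "\<lambda>i j k. dlt ((fst i \<otimes>\<^bsub>R\<^esub> E (snd i \<otimes>\<^bsub>R\<^esub> fst j)) \<otimes>\<^bsub>R\<^esub> E (snd j \<otimes>\<^bsub>R\<^esub> fst k)) (snd k) t"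
  have "mm (mm f g) h t = (\<Sum>x\<in>supp f \<times> supp g. (case x of (i,j) \<Rightarrow> f i * g j) *
      lin (\<lambda>q. K ((case x of (i,j) \<Rightarrow> fst i \<otimes>\<^bsub>R\<^esub> E (snd i \<otimes>\<^bsub>R\<^esub> fst j)), (case x of (i,j) \<Rightarrow> snd j)) q t) h)"
    unfolding mm_expand[OF f g] mm_lin using ff by (subst lin_dsum) auto
  also have "\<dots> = (\<Sum>i\<in>supp f. \<Sum>j\<in>supp g. f i * g j * (\<Sum>k\<in>supp h. h k * ?X i j k))"
    by (simp add: sum.cartesian_product lin_def K_def split_def)
  finally have L: "mm (mm f g) h t = (\<Sum>i\<in>supp f. \<Sum>j\<in>supp g. \<Sum>k\<in>supp h. f i * g j * h k * ?X i j k)"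
    by (simp add: sum_distrib_left mult.assoc)
  have "mm f (mm g h) t = (\<Sum>y\<in>supp g \<times> supp h. (case y of (j,k) \<Rightarrow> g j * h k) *
      lin (\<lambda>p. K p ((case y of (j,k) \<Rightarrow> fst j \<otimes>\<^bsub>R\<^esub> E (snd j \<otimes>\<^bsub>R\<^esub> fst k)), (case y of (j,k) \<Rightarrow> snd k)) t) f)"
    unfolding mm_expand[OF g h] mm_lin2 using ff by (subst lin_dsum) auto
  also have "\<dots> = (\<Sum>j\<in>supp g. \<Sum>k\<in>supp h. g j * h k * (\<Sum>i\<in>supp f. f i *
      dlt (fst i \<otimes>\<^bsub>R\<^esub> E (snd i \<otimes>\<^bsub>R\<^esub> (fst j \<otimes>\<^bsub>R\<^esub> E (snd j \<otimes>\<^bsub>R\<^esub> fst k)))) (snd k) t))"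
    by (simp add: sum.cartesian_product lin_def K_def split_def)
  also have "\<dots> = (\<Sum>j\<in>supp g. \<Sum>k\<in>supp h. \<Sum>i\<in>supp f. g j * h k * (f i *
      dlt (fst i \<otimes>\<^bsub>R\<^esub> E (snd i \<otimes>\<^bsub>R\<^esub> (fst j \<otimes>\<^bsub>R\<^esub> E (snd j \<otimes>\<^bsub>R\<^esub> fst k)))) (snd k) t))"
    by (simp only: sum_distrib_left)
  also have "\<dots> = (\<Sum>j\<in>supp g. \<Sum>k\<in>supp h. \<Sum>i\<in>supp f. f i * g j * h k * ?X i j k)"
  proof (intro sum.cong refl)
    fix i j k assume j: "j \<in> supp g" and k: "k \<in> supp h" and i: "i \<in> supp f"
    have c: "fst i \<in> carrier R" "snd i \<in> carrier R" "fst j \<in> carrier R" "snd j \<in> carrier R"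
      "fst k \<in> carrier R" using FS_mem'[OF f i] FS_mem'[OF g j] FS_mem'[OF h k] by auto
    have "fst i \<otimes>\<^bsub>R\<^esub> E (snd i \<otimes>\<^bsub>R\<^esub> (fst j \<otimes>\<^bsub>R\<^esub> E (snd j \<otimes>\<^bsub>R\<^esub> fst k))) =
       (fst i \<otimes>\<^bsub>R\<^esub> E (snd i \<otimes>\<^bsub>R\<^esub> fst j)) \<otimes>\<^bsub>R\<^esub> E (snd j \<otimes>\<^bsub>R\<^esub> fst k)"
      using c E_S by (simp add: Rr.m_assoc[symmetric] E_right)
    then show "g j * h k * (f i * dlt (fst i \<otimes>\<^bsub>R\<^esub> E (snd i \<otimes>\<^bsub>R\<^esub> (fst j \<otimes>\<^bsub>R\<^esub> E (snd j \<otimes>\<^bsub>R\<^esub> fst k)))) (snd k) t)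
       = f i * g j * h k * ?X i j k" by (simp add: mult_ac)
  qed
  finally have Rt: "mm f (mm g h) t = (\<Sum>j\<in>supp g. \<Sum>k\<in>supp h. \<Sum>i\<in>supp f. f i * g j * h k * ?X i j k)" .
  show "mm (mm f g) h t = mm f (mm g h) t"
    unfolding L Rt
    by (subst sum.swap) (simp add: sum.swap[of _ "supp h"])
qed

end


context bc begin

lemma eqv_dlt_sum_l: "finite I \<Longrightarrow> (\<And>i. i \<in> I \<Longrightarrow> a i \<in> carrier R) \<Longrightarrow> b \<in> carrier R \<Longrightarrow>
  eqv (\<lambda>p. \<Sum>i\<in>I. dlt (a i) b p) (dlt (finsum R a I) b)"
proof (induction I rule: finite_induct)
  case empty
  have "(\<lambda>p. dlt (0 \<odot>\<^bsub>R\<^esub> \<zero>\<^bsub>R\<^esub>) b p - 0 * dlt \<zero>\<^bsub>R\<^esub> b p) \<in> V"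
    using empty by (intro tens_rel.scl) auto
  then have "(\<lambda>p. dlt \<zero>\<^bsub>R\<^esub> b p) \<in> V" by simp
  then have "(\<lambda>p. - dlt \<zero>\<^bsub>R\<^esub> b p) \<in> V" by (rule V_neg)
  then show ?case by (simp add: eqv_def)
next
  case (insert x I)
  have ax: "a x \<in> carrier R" and aI: "a \<in> I \<rightarrow> carrier R" using insert by auto
  have fs: "finsum R a I \<in> carrier R" using aI by (rule Rr.finsum_closed)
  have e1: "(\<lambda>p. \<Sum>i\<in>insert x I. dlt (a i) b p) = (\<lambda>p. dlt (a x) b p + (\<Sum>i\<in>I. dlt (a i) b p))"
    using insert by simp
  have e2: "eqv (\<lambda>p. dlt (a x) b p + (\<Sum>i\<in>I. dlt (a i) b p)) (\<lambda>p. dlt (a x) b p + dlt (finsum R a I) b p)"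
    using insert by (intro eqv_add) auto
  have e3: "eqv (\<lambda>p. dlt (a x) b p + dlt (finsum R a I) b p) (dlt (a x \<oplus>\<^bsub>R\<^esub> finsum R a I) b)"
  proof -
    have "(\<lambda>p. dlt (a x \<oplus>\<^bsub>R\<^esub> finsum R a I) b p - dlt (a x) b p - dlt (finsum R a I) b p) \<in> V"
      using ax fs insert by (intro tens_rel.addl) auto
    then have "(\<lambda>p. - (dlt (a x \<oplus>\<^bsub>R\<^esub> finsum R a I) b p - dlt (a x) b p - dlt (finsum R a I) b p)) \<in> V"
      by (rule V_neg)
    then show ?thesis by (simp add: eqv_def algebra_simps)
  qed
  have "finsum R a (insert x I) = a x \<oplus>\<^bsub>R\<^esub> finsum R a I"
    using insert ax aI by (intro Rr.finsum_insert) auto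
  moreover have "eqv (\<lambda>p. \<Sum>i\<in>insert x I. dlt (a i) b p) (dlt (a x \<oplus>\<^bsub>R\<^esub> finsum R a I) b)"
    unfolding e1 by (rule eqv_trans[OF e2 e3])
  ultimately show ?case by simp
qed

lemma eqv_dlt_sum_r: "finite I \<Longrightarrow> (\<And>i. i \<in> I \<Longrightarrow> b i \<in> carrier R) \<Longrightarrow> a \<in> carrier R \<Longrightarrow>
  eqv (\<lambda>p. \<Sum>i\<in>I. dlt a (b i) p) (dlt a (finsum R b I))"
proof (induction I rule: finite_induct)
  case empty
  have "(\<lambda>p. dlt a (0 \<odot>\<^bsub>R\<^esub> \<zero>\<^bsub>R\<^esub>) p - 0 * dlt a \<zero>\<^bsub>R\<^esub> p) \<in> V"
    using empty by (intro tens_rel.scr) auto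
  then have "(\<lambda>p. dlt a \<zero>\<^bsub>R\<^esub> p) \<in> V" by simp
  then have "(\<lambda>p. - dlt a \<zero>\<^bsub>R\<^esub> p) \<in> V" by (rule V_neg)
  then show ?case by (simp add: eqv_def)
next
  case (insert x I)
  have ax: "b x \<in> carrier R" and aI: "b \<in> I \<rightarrow> carrier R" using insert by auto
  have fs: "finsum R b I \<in> carrier R" using aI by (rule Rr.finsum_closed)
  have e1: "(\<lambda>p. \<Sum>i\<in>insert x I. dlt a (b i) p) = (\<lambda>p. dlt a (b x) p + (\<Sum>i\<in>I. dlt a (b i) p))"
    using insert by simp
  have e2: "eqv (\<lambda>p. dlt a (b x) p + (\<Sum>i\<in>I. dlt a (b i) p)) (\<lambda>p. dlt a (b x) p + dlt a (finsum R b I) p)"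
    using insert by (intro eqv_add) auto
  have e3: "eqv (\<lambda>p. dlt a (b x) p + dlt a (finsum R b I) p) (dlt a (b x \<oplus>\<^bsub>R\<^esub> finsum R b I))"
  proof -
    have "(\<lambda>p. dlt a (b x \<oplus>\<^bsub>R\<^esub> finsum R b I) p - dlt a (b x) p - dlt a (finsum R b I) p) \<in> V"
      using ax fs insert by (intro tens_rel.addr) auto
    then have "(\<lambda>p. - (dlt a (b x \<oplus>\<^bsub>R\<^esub> finsum R b I) p - dlt a (b x) p - dlt a (finsum R b I) p)) \<in> V"
      by (rule V_neg)
    then show ?thesis by (simp add: eqv_def algebra_simps)
  qed
  have "finsum R b (insert x I) = b x \<oplus>\<^bsub>R\<^esub> finsum R b I"
    using insert ax aI by (intro Rr.finsum_insert) auto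
  moreover have "eqv (\<lambda>p. \<Sum>i\<in>insert x I. dlt a (b i) p) (dlt a (b x \<oplus>\<^bsub>R\<^esub> finsum R b I))"
    unfolding e1 by (rule eqv_trans[OF e2 e3])
  ultimately show ?case by simp
qed

declare eqv_trans[trans]

definition u1 :: "'a \<times> 'a \<Rightarrow> 'k" where "u1 = (\<lambda>p. \<Sum>i<n. dlt (r i) (s i) p)"

lemma u1_dsum: "u1 = dsum {..<n} (\<lambda>_. 1) r s" by (simp add: u1_def dsum_def)
lemma u1_FS: "u1 \<in> FS" unfolding u1_dsum by (intro FS_dsum) auto
lemma one1: "\<one>\<^bsub>R1\<^esub> = cls u1" by (simp add: basic_constr_def u1_def)

lemma mm_u1_left: "f \<in> FS \<Longrightarrow> eqv (mm u1 f) f"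
proof -
  assume f: "f \<in> FS"
  have ff: "finite (supp f)" using f FS_fin by auto
  have eq1: "mm u1 f = (\<lambda>t. \<Sum>q\<in>supp f. f q * (\<Sum>i<n. dlt (r i \<otimes>\<^bsub>R\<^esub> E (s i \<otimes>\<^bsub>R\<^esub> fst q)) (snd q) t))"
    unfolding mm_via u1_dsum by (simp add: lin_dsum K_def)
  have "eqv (\<lambda>t. \<Sum>q\<in>supp f. f q * (\<Sum>i<n. dlt (r i \<otimes>\<^bsub>R\<^esub> E (s i \<otimes>\<^bsub>R\<^esub> fst q)) (snd q) t)) (\<lambda>t. \<Sum>q\<in>supp f. f q * dlt (fst q) (snd q) t)"
  proof (intro eqv_sum[OF ff] eqv_smul)
    fix q assume q: "q \<in> supp f"
    then have c: "fst q \<in> carrier R" "snd q \<in> carrier R" using FS_mem'[OF f] by auto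
    have "eqv (\<lambda>t. \<Sum>i<n. dlt (r i \<otimes>\<^bsub>R\<^esub> E (s i \<otimes>\<^bsub>R\<^esub> fst q)) (snd q) t)
      (dlt (finsum R (\<lambda>i. r i \<otimes>\<^bsub>R\<^esub> E (s i \<otimes>\<^bsub>R\<^esub> fst q)) {..<n}) (snd q))"
      using c by (intro eqv_dlt_sum_l) auto
    then show "eqv (\<lambda>t. \<Sum>i<n. dlt (r i \<otimes>\<^bsub>R\<^esub> E (s i \<otimes>\<^bsub>R\<^esub> fst q)) (snd q) t) (dlt (fst q) (snd q))"
      using dual2 c by simp
  qed
  moreover have "(\<lambda>t. \<Sum>q\<in>supp f. f q * dlt (fst q) (snd q) t) = f"
    using expand[OF ff] by (simp add: dsum_def)
  ultimately show ?thesis using eq1 by simp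
qed

lemma mm_u1_right: "f \<in> FS \<Longrightarrow> eqv (mm f u1) f"
proof -
  assume f: "f \<in> FS"
  have ff: "finite (supp f)" using f FS_fin by auto
  have eq1: "mm f u1 = (\<lambda>t. \<Sum>p\<in>supp f. f p * (\<Sum>i<n. dlt (fst p \<otimes>\<^bsub>R\<^esub> E (snd p \<otimes>\<^bsub>R\<^esub> r i)) (s i) t))"
    unfolding mm_via2 u1_dsum by (simp add: lin_dsum K_def)
  have "eqv (\<lambda>t. \<Sum>p\<in>supp f. f p * (\<Sum>i<n. dlt (fst p \<otimes>\<^bsub>R\<^esub> E (snd p \<otimes>\<^bsub>R\<^esub> r i)) (s i) t)) (\<lambda>t. \<Sum>p\<in>supp f. f p * dlt (fst p) (snd p) t)"
  proof (intro eqv_sum[OF ff] eqv_smul)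
    fix p assume p: "p \<in> supp f"
    then have c: "fst p \<in> carrier R" "snd p \<in> carrier R" using FS_mem'[OF f] by auto
    have "eqv (\<lambda>t. \<Sum>i<n. dlt (fst p \<otimes>\<^bsub>R\<^esub> E (snd p \<otimes>\<^bsub>R\<^esub> r i)) (s i) t)
       (\<lambda>t. \<Sum>i<n. dlt (fst p) (E (snd p \<otimes>\<^bsub>R\<^esub> r i) \<otimes>\<^bsub>R\<^esub> s i) t)"
    proof (intro eqv_sum)
      fix i assume "i \<in> {..<n}"
      then have i: "i < n" by simp
      have "(\<lambda>t. dlt (fst p \<otimes>\<^bsub>R\<^esub> E (snd p \<otimes>\<^bsub>R\<^esub> r i)) (s i) t - dlt (fst p) (E (snd p \<otimes>\<^bsub>R\<^esub> r i) \<otimes>\<^bsub>R\<^esub> s i) t) \<in> V"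
        using c i E_S by (intro tens_rel.bal) auto
      then show "eqv (dlt (fst p \<otimes>\<^bsub>R\<^esub> E (snd p \<otimes>\<^bsub>R\<^esub> r i)) (s i)) (dlt (fst p) (E (snd p \<otimes>\<^bsub>R\<^esub> r i) \<otimes>\<^bsub>R\<^esub> s i))"
        by (simp add: eqv_def)
    qed simp
    also have "eqv \<dots> (dlt (fst p) (finsum R (\<lambda>i. E (snd p \<otimes>\<^bsub>R\<^esub> r i) \<otimes>\<^bsub>R\<^esub> s i) {..<n}))"
      using c by (intro eqv_dlt_sum_r) auto
    finally show "eqv (\<lambda>t. \<Sum>i<n. dlt (fst p \<otimes>\<^bsub>R\<^esub> E (snd p \<otimes>\<^bsub>R\<^esub> r i)) (s i) t) (dlt (fst p) (snd p))"
      using dual1 c by simp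
  qed
  moreover have "(\<lambda>t. \<Sum>p\<in>supp f. f p * dlt (fst p) (snd p) t) = f"
    using expand[OF ff] by (simp add: dsum_def)
  ultimately show ?thesis using eq1 by simp
qed

end


context bc begin

lemma mul1_car: "f \<in> FS \<Longrightarrow> g \<in> FS \<Longrightarrow> cls f \<otimes>\<^bsub>R1\<^esub> cls g \<in> carrier R1"
  by (simp add: mul1 mm_FS)

lemma ag1: "abelian_group R1"
proof (rule abelian_groupI)
  fix x y assume "x \<in> carrier R1" "y \<in> carrier R1"
  then show "x \<oplus>\<^bsub>R1\<^esub> y \<in> carrier R1" by (elim car1E) (simp add: add1 FS_add)
next
  show "\<zero>\<^bsub>R1\<^esub> \<in> carrier R1" by (simp add: zero1)
next
  fix x y z assume "x \<in> carrier R1" "y \<in> carrier R1" "z \<in> carrier R1"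
  then show "x \<oplus>\<^bsub>R1\<^esub> y \<oplus>\<^bsub>R1\<^esub> z = x \<oplus>\<^bsub>R1\<^esub> (y \<oplus>\<^bsub>R1\<^esub> z)"
    by (elim car1E) (simp add: add1 FS_add add.assoc)
next
  fix x y assume "x \<in> carrier R1" "y \<in> carrier R1"
  then show "x \<oplus>\<^bsub>R1\<^esub> y = y \<oplus>\<^bsub>R1\<^esub> x" by (elim car1E) (simp add: add1 add.commute)
next
  fix x assume "x \<in> carrier R1"
  then show "\<zero>\<^bsub>R1\<^esub> \<oplus>\<^bsub>R1\<^esub> x = x" by (elim car1E) (simp add: add1 zero1)
next
  fix x assume "x \<in> carrier R1"
  then show "\<exists>y\<in>carrier R1. y \<oplus>\<^bsub>R1\<^esub> x = \<zero>\<^bsub>R1\<^esub>"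
  proof (elim car1E)
    fix f assume f: "f \<in> FS" "x = cls f"
    have "(\<lambda>p. - f p) \<in> FS" using FS_smul[OF f(1), of "-1"] by simp
    then show ?thesis using f by (intro bexI[of _ "cls (\<lambda>p. - f p)"]) (simp_all add: add1 zero1)
  qed
qed

lemma monoid1: "monoid R1"
proof (rule monoidI)
  fix x y assume "x \<in> carrier R1" "y \<in> carrier R1"
  then show "x \<otimes>\<^bsub>R1\<^esub> y \<in> carrier R1" by (elim car1E) (simp add: mul1_car)
next
  show "\<one>\<^bsub>R1\<^esub> \<in> carrier R1" by (simp add: one1 u1_FS)
next
  fix x y z assume "x \<in> carrier R1" "y \<in> carrier R1" "z \<in> carrier R1"
  then show "x \<otimes>\<^bsub>R1\<^esub> y \<otimes>\<^bsub>R1\<^esub> z = x \<otimes>\<^bsub>R1\<^esub> (y \<otimes>\<^bsub>R1\<^esub> z)"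
    by (elim car1E) (simp add: mul1 mm_FS mm_assoc)
next
  fix x assume "x \<in> carrier R1"
  then show "\<one>\<^bsub>R1\<^esub> \<otimes>\<^bsub>R1\<^esub> x = x"
    by (elim car1E) (simp add: one1 mul1 u1_FS cls_eqI mm_FS mm_u1_left)
next
  fix x assume "x \<in> carrier R1"
  then show "x \<otimes>\<^bsub>R1\<^esub> \<one>\<^bsub>R1\<^esub> = x"
    by (elim car1E) (simp add: one1 mul1 u1_FS cls_eqI mm_FS mm_u1_right)
qed

lemma ring1: "ring R1"
proof (rule ringI[OF ag1 monoid1])
  fix x y z assume "x \<in> carrier R1" "y \<in> carrier R1" "z \<in> carrier R1"
  then show "(x \<oplus>\<^bsub>R1\<^esub> y) \<otimes>\<^bsub>R1\<^esub> z = x \<otimes>\<^bsub>R1\<^esub> z \<oplus>\<^bsub>R1\<^esub> y \<otimes>\<^bsub>R1\<^esub> z"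
    by (elim car1E) (simp add: add1 mul1 FS_add mm_FS mm_addl FS_fin)
next
  fix x y z assume "x \<in> carrier R1" "y \<in> carrier R1" "z \<in> carrier R1"
  then show "z \<otimes>\<^bsub>R1\<^esub> (x \<oplus>\<^bsub>R1\<^esub> y) = z \<otimes>\<^bsub>R1\<^esub> x \<oplus>\<^bsub>R1\<^esub> z \<otimes>\<^bsub>R1\<^esub> y"
    by (elim car1E) (simp add: add1 mul1 FS_add mm_FS mm_addr FS_fin)
qed

lemma module1: "module kring R1"
proof (rule moduleI[OF cring_k ag1])
  fix a x assume "x \<in> carrier R1"
  then show "a \<odot>\<^bsub>R1\<^esub> x \<in> carrier R1" by (elim car1E) (simp add: sm1 FS_smul)
next
  fix a b x assume "x \<in> carrier R1"
  then show "(a \<oplus>\<^bsub>kring\<^esub> b) \<odot>\<^bsub>R1\<^esub> x = a \<odot>\<^bsub>R1\<^esub> x \<oplus>\<^bsub>R1\<^esub> b \<odot>\<^bsub>R1\<^esub> x"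
    by (elim car1E) (simp add: sm1 add1 FS_smul distrib_right)
next
  fix a x y assume "x \<in> carrier R1" "y \<in> carrier R1"
  then show "a \<odot>\<^bsub>R1\<^esub> (x \<oplus>\<^bsub>R1\<^esub> y) = a \<odot>\<^bsub>R1\<^esub> x \<oplus>\<^bsub>R1\<^esub> a \<odot>\<^bsub>R1\<^esub> y"
    by (elim car1E) (simp add: sm1 add1 FS_smul FS_add distrib_left)
next
  fix a b x assume "x \<in> carrier R1"
  then show "(a \<otimes>\<^bsub>kring\<^esub> b) \<odot>\<^bsub>R1\<^esub> x = a \<odot>\<^bsub>R1\<^esub> (b \<odot>\<^bsub>R1\<^esub> x)"
    by (elim car1E) (simp add: sm1 FS_smul mult.assoc)
next
  fix x assume "x \<in> carrier R1"
  then show "\<one>\<^bsub>kring\<^esub> \<odot>\<^bsub>R1\<^esub> x = x"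
    by (elim car1E) (simp add: sm1)
qed

lemma kalg1: "kalg R1"
  unfolding kalg_def
proof (intro conjI allI impI ring1 module1)
  fix c a b assume "a \<in> carrier R1" "b \<in> carrier R1"
  then show "(c \<odot>\<^bsub>R1\<^esub> a) \<otimes>\<^bsub>R1\<^esub> b = c \<odot>\<^bsub>R1\<^esub> (a \<otimes>\<^bsub>R1\<^esub> b)"
    by (elim car1E) (simp add: sm1 mul1 FS_smul mm_FS mm_smull FS_fin)
next
  fix c a b assume "a \<in> carrier R1" "b \<in> carrier R1"
  then show "a \<otimes>\<^bsub>R1\<^esub> (c \<odot>\<^bsub>R1\<^esub> b) = c \<odot>\<^bsub>R1\<^esub> (a \<otimes>\<^bsub>R1\<^esub> b)"
    by (elim car1E) (simp add: sm1 mul1 FS_smul mm_FS mm_smulr FS_fin)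
qed

end


context bc begin

lemma eq_eqv_trans[trans]: "f = g \<Longrightarrow> eqv g h \<Longrightarrow> eqv f h" by simp
lemma eqv_eq_trans[trans]: "eqv f g \<Longrightarrow> g = h \<Longrightarrow> eqv f h" by simp

sublocale R1r: ring R1 by (rule ring1)
sublocale R1m: module kring R1 by (rule module1)

lemma eqv_scl: "a \<in> carrier R \<Longrightarrow> b \<in> carrier R \<Longrightarrow> eqv (dlt (c \<odot>\<^bsub>R\<^esub> a) b) (\<lambda>p. c * dlt a b p)"
  unfolding eqv_def by (rule tens_rel.scl)
lemma eqv_scr: "a \<in> carrier R \<Longrightarrow> b \<in> carrier R \<Longrightarrow> eqv (dlt a (c \<odot>\<^bsub>R\<^esub> b)) (\<lambda>p. c * dlt a b p)"
  unfolding eqv_def by (rule tens_rel.scr)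
lemma eqv_bal: "a \<in> carrier R \<Longrightarrow> b \<in> carrier R \<Longrightarrow> x \<in> S \<Longrightarrow> eqv (dlt (a \<otimes>\<^bsub>R\<^esub> x) b) (dlt a (x \<otimes>\<^bsub>R\<^esub> b))"
  unfolding eqv_def by (rule tens_rel.bal)

lemma mm_dlt_left: "mm (dlt x y) f = (\<lambda>t. \<Sum>q\<in>supp f. f q * dlt (x \<otimes>\<^bsub>R\<^esub> E (y \<otimes>\<^bsub>R\<^esub> fst q)) (snd q) t)"
  unfolding mm_via by (simp add: K_def)
lemma mm_dlt_right: "mm f (dlt x y) = (\<lambda>t. \<Sum>p\<in>supp f. f p * dlt (fst p \<otimes>\<^bsub>R\<^esub> E (snd p \<otimes>\<^bsub>R\<^esub> x)) y t)"
  unfolding mm_via2 by (simp add: K_def)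

lemma collapse_left: "x \<in> carrier R \<Longrightarrow> y \<in> carrier R \<Longrightarrow> a \<in> carrier R \<Longrightarrow>
  eqv (\<lambda>t. \<Sum>i<n. dlt (a \<otimes>\<^bsub>R\<^esub> r i \<otimes>\<^bsub>R\<^esub> E (s i \<otimes>\<^bsub>R\<^esub> x)) y t) (dlt (a \<otimes>\<^bsub>R\<^esub> x) y)"
proof -
  assume c: "x \<in> carrier R" "y \<in> carrier R" "a \<in> carrier R"
  have "eqv (\<lambda>t. \<Sum>i<n. dlt (a \<otimes>\<^bsub>R\<^esub> r i \<otimes>\<^bsub>R\<^esub> E (s i \<otimes>\<^bsub>R\<^esub> x)) y t)
      (dlt (finsum R (\<lambda>i. a \<otimes>\<^bsub>R\<^esub> r i \<otimes>\<^bsub>R\<^esub> E (s i \<otimes>\<^bsub>R\<^esub> x)) {..<n}) y)"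
    using c by (intro eqv_dlt_sum_l) auto
  moreover have "finsum R (\<lambda>i. a \<otimes>\<^bsub>R\<^esub> r i \<otimes>\<^bsub>R\<^esub> E (s i \<otimes>\<^bsub>R\<^esub> x)) {..<n} =
      a \<otimes>\<^bsub>R\<^esub> finsum R (\<lambda>i. r i \<otimes>\<^bsub>R\<^esub> E (s i \<otimes>\<^bsub>R\<^esub> x)) {..<n}"
    using c by (subst Rr.finsum_rdistr) (auto simp: Rr.m_assoc intro!: Rr.finsum_cong')
  ultimately show ?thesis using dual2 c by simp
qed

lemma collapse_right: "x \<in> carrier R \<Longrightarrow> y \<in> carrier R \<Longrightarrow> a \<in> carrier R \<Longrightarrow>
  eqv (\<lambda>t. \<Sum>i<n. dlt (x \<otimes>\<^bsub>R\<^esub> E (y \<otimes>\<^bsub>R\<^esub> a \<otimes>\<^bsub>R\<^esub> r i)) (s i) t) (dlt x (y \<otimes>\<^bsub>R\<^esub> a))"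
proof -
  assume c: "x \<in> carrier R" "y \<in> carrier R" "a \<in> carrier R"
  have "eqv (\<lambda>t. \<Sum>i<n. dlt (x \<otimes>\<^bsub>R\<^esub> E (y \<otimes>\<^bsub>R\<^esub> a \<otimes>\<^bsub>R\<^esub> r i)) (s i) t)
       (\<lambda>t. \<Sum>i<n. dlt x (E (y \<otimes>\<^bsub>R\<^esub> a \<otimes>\<^bsub>R\<^esub> r i) \<otimes>\<^bsub>R\<^esub> s i) t)"
    using c E_S by (intro eqv_sum eqv_bal) auto
  also have "eqv \<dots> (dlt x (finsum R (\<lambda>i. E (y \<otimes>\<^bsub>R\<^esub> a \<otimes>\<^bsub>R\<^esub> r i) \<otimes>\<^bsub>R\<^esub> s i) {..<n}))"
    using c by (intro eqv_dlt_sum_r) auto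
  finally show ?thesis using dual1 c by (simp add: Rr.m_assoc)
qed

definition iota_f :: "'a \<Rightarrow> 'a \<times> 'a \<Rightarrow> 'k" where
  "iota_f a = dsum {..<n} (\<lambda>_. 1) (\<lambda>i. a \<otimes>\<^bsub>R\<^esub> r i) s"

abbreviation "\<iota> \<equiv> bc_incl R S r s n"

lemma iota_cls: "\<iota> a = cls (iota_f a)"
  by (simp add: bc_incl_def iota_f_def dsum_def)
lemma iota_f_FS: "a \<in> carrier R \<Longrightarrow> iota_f a \<in> FS"
  unfolding iota_f_def by (intro FS_dsum) auto
lemma iota_car: "a \<in> carrier R \<Longrightarrow> \<iota> a \<in> carrier R1"
  by (simp add: iota_cls iota_f_FS)

lemma L_iota: assumes a: "a \<in> carrier R" and J: "finite J" and xy: "\<And>j. j \<in> J \<Longrightarrow> x j \<in> carrier R \<and> y j \<in> carrier R"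
  shows "eqv (mm (iota_f a) (dsum J c x y)) (dsum J c (\<lambda>j. a \<otimes>\<^bsub>R\<^esub> x j) y)"
proof -
  have "mm (iota_f a) (dsum J c x y) = (\<lambda>t. \<Sum>j\<in>J. c j * (\<Sum>i<n. dlt (a \<otimes>\<^bsub>R\<^esub> r i \<otimes>\<^bsub>R\<^esub> E (s i \<otimes>\<^bsub>R\<^esub> x j)) (y j) t))"
    unfolding iota_f_def
    apply (subst mm_dsum[OF finite_lessThan J], rule ext)
    apply (simp add: dsum_cart sum_distrib_left)
    by (rule sum.swap)
  also have "eqv \<dots> (dsum J c (\<lambda>j. a \<otimes>\<^bsub>R\<^esub> x j) y)"
    unfolding dsum_def using J xy a by (intro eqv_sum eqv_smul collapse_left) auto
  finally show ?thesis .
qed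

lemma R_iota: assumes a: "a \<in> carrier R" and J: "finite J" and xy: "\<And>j. j \<in> J \<Longrightarrow> x j \<in> carrier R \<and> y j \<in> carrier R"
  shows "eqv (mm (dsum J c x y) (iota_f a)) (dsum J c x (\<lambda>j. y j \<otimes>\<^bsub>R\<^esub> a))"
proof -
  have "mm (dsum J c x y) (iota_f a) = (\<lambda>t. \<Sum>j\<in>J. c j * (\<Sum>i<n. dlt (x j \<otimes>\<^bsub>R\<^esub> E (y j \<otimes>\<^bsub>R\<^esub> (a \<otimes>\<^bsub>R\<^esub> r i))) (s i) t))"
    unfolding iota_f_def using J
    by (subst mm_dsum) (auto simp: dsum_cart sum_distrib_left)
  also have "\<dots> = (\<lambda>t. \<Sum>j\<in>J. c j * (\<Sum>i<n. dlt (x j \<otimes>\<^bsub>R\<^esub> E (y j \<otimes>\<^bsub>R\<^esub> a \<otimes>\<^bsub>R\<^esub> r i)) (s i) t))"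
    using xy a by (intro ext sum.cong refl) (simp add: Rr.m_assoc)
  also have "eqv \<dots> (dsum J c x (\<lambda>j. y j \<otimes>\<^bsub>R\<^esub> a))"
    unfolding dsum_def using J xy a by (intro eqv_sum eqv_smul collapse_right) auto
  finally show ?thesis .
qed

end


context bc begin

lemma iota_f_mult: "a \<in> carrier R \<Longrightarrow> b \<in> carrier R \<Longrightarrow> eqv (mm (iota_f a) (iota_f b)) (iota_f (a \<otimes>\<^bsub>R\<^esub> b))"
proof -
  assume a: "a \<in> carrier R" and b: "b \<in> carrier R"
  have "eqv (mm (iota_f a) (iota_f b)) (dsum {..<n} (\<lambda>_. 1) (\<lambda>i. a \<otimes>\<^bsub>R\<^esub> (b \<otimes>\<^bsub>R\<^esub> r i)) s)"
    unfolding iota_f_def[of b] using a b by (intro L_iota) auto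
  also have "dsum {..<n} (\<lambda>_. 1) (\<lambda>i. a \<otimes>\<^bsub>R\<^esub> (b \<otimes>\<^bsub>R\<^esub> r i)) s = iota_f (a \<otimes>\<^bsub>R\<^esub> b)"
    unfolding iota_f_def dsum_def using a b by (intro ext sum.cong refl) (simp add: Rr.m_assoc)
  finally show ?thesis .
qed

lemma iota_mult: "a \<in> carrier R \<Longrightarrow> b \<in> carrier R \<Longrightarrow> \<iota> a \<otimes>\<^bsub>R1\<^esub> \<iota> b = \<iota> (a \<otimes>\<^bsub>R\<^esub> b)"
  by (simp add: iota_cls mul1 iota_f_FS mm_FS cls_eqI iota_f_mult)

lemma iota_f_one: "iota_f \<one>\<^bsub>R\<^esub> = u1"
  unfolding iota_f_def u1_dsum dsum_def by (intro ext sum.cong refl) simp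
lemma iota_one: "\<iota> \<one>\<^bsub>R\<^esub> = \<one>\<^bsub>R1\<^esub>"
  by (simp add: iota_cls iota_f_one one1)

lemma iota_add: "a \<in> carrier R \<Longrightarrow> b \<in> carrier R \<Longrightarrow> \<iota> a \<oplus>\<^bsub>R1\<^esub> \<iota> b = \<iota> (a \<oplus>\<^bsub>R\<^esub> b)"
proof -
  assume a: "a \<in> carrier R" and b: "b \<in> carrier R"
  have "eqv (\<lambda>p. iota_f a p + iota_f b p) (iota_f (a \<oplus>\<^bsub>R\<^esub> b))"
  proof -
    have "(\<lambda>p. iota_f a p + iota_f b p) = (\<lambda>p. \<Sum>i<n. dlt (a \<otimes>\<^bsub>R\<^esub> r i) (s i) p + dlt (b \<otimes>\<^bsub>R\<^esub> r i) (s i) p)"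
      by (simp add: iota_f_def dsum_def sum.distrib)
    also have "eqv \<dots> (\<lambda>p. \<Sum>i<n. dlt (a \<otimes>\<^bsub>R\<^esub> r i \<oplus>\<^bsub>R\<^esub> b \<otimes>\<^bsub>R\<^esub> r i) (s i) p)"
    proof (intro eqv_sum)
      fix i assume "i \<in> {..<n}"
      then have i: "i < n" by simp
      have "(\<lambda>p. dlt (a \<otimes>\<^bsub>R\<^esub> r i \<oplus>\<^bsub>R\<^esub> b \<otimes>\<^bsub>R\<^esub> r i) (s i) p - dlt (a \<otimes>\<^bsub>R\<^esub> r i) (s i) p - dlt (b \<otimes>\<^bsub>R\<^esub> r i) (s i) p) \<in> V"
        using a b i by (intro tens_rel.addl) auto
      then have "(\<lambda>p. - (dlt (a \<otimes>\<^bsub>R\<^esub> r i \<oplus>\<^bsub>R\<^esub> b \<otimes>\<^bsub>R\<^esub> r i) (s i) p - dlt (a \<otimes>\<^bsub>R\<^esub> r i) (s i) p - dlt (b \<otimes>\<^bsub>R\<^esub> r i) (s i) p)) \<in> V"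
        by (rule V_neg)
      then show "eqv (\<lambda>p. dlt (a \<otimes>\<^bsub>R\<^esub> r i) (s i) p + dlt (b \<otimes>\<^bsub>R\<^esub> r i) (s i) p) (dlt (a \<otimes>\<^bsub>R\<^esub> r i \<oplus>\<^bsub>R\<^esub> b \<otimes>\<^bsub>R\<^esub> r i) (s i))"
        by (simp add: eqv_def algebra_simps)
    qed simp
    also have "(\<lambda>p. \<Sum>i<n. dlt (a \<otimes>\<^bsub>R\<^esub> r i \<oplus>\<^bsub>R\<^esub> b \<otimes>\<^bsub>R\<^esub> r i) (s i) p) = iota_f (a \<oplus>\<^bsub>R\<^esub> b)"
      unfolding iota_f_def dsum_def using a b by (intro ext sum.cong refl) (simp add: Rr.l_distr)
    finally show ?thesis .
  qed
  then show ?thesis using a b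
    by (simp add: iota_cls add1 iota_f_FS FS_add cls_eqI)
qed

lemma iota_sm: "a \<in> carrier R \<Longrightarrow> c \<odot>\<^bsub>R1\<^esub> \<iota> a = \<iota> (c \<odot>\<^bsub>R\<^esub> a)"
proof -
  assume a: "a \<in> carrier R"
  have "eqv (\<lambda>p. c * iota_f a p) (iota_f (c \<odot>\<^bsub>R\<^esub> a))"
  proof -
    have "(\<lambda>p. c * iota_f a p) = (\<lambda>p. \<Sum>i<n. c * dlt (a \<otimes>\<^bsub>R\<^esub> r i) (s i) p)"
      by (simp add: iota_f_def dsum_def sum_distrib_left)
    also have "eqv \<dots> (\<lambda>p. \<Sum>i<n. dlt (c \<odot>\<^bsub>R\<^esub> (a \<otimes>\<^bsub>R\<^esub> r i)) (s i) p)"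
      using a by (intro eqv_sum eqv_sym[OF eqv_scl]) auto
    also have "(\<lambda>p. \<Sum>i<n. dlt (c \<odot>\<^bsub>R\<^esub> (a \<otimes>\<^bsub>R\<^esub> r i)) (s i) p) = iota_f (c \<odot>\<^bsub>R\<^esub> a)"
      unfolding iota_f_def dsum_def using a by (intro ext sum.cong refl) (simp add: sm_mult_l)
    finally show ?thesis .
  qed
  then show ?thesis using a
    by (simp add: iota_cls sm1 iota_f_FS FS_smul cls_eqI)
qed

lemma iota_zero: "\<iota> \<zero>\<^bsub>R\<^esub> = \<zero>\<^bsub>R1\<^esub>"
proof -
  have "\<iota> \<zero>\<^bsub>R\<^esub> = \<iota> ((0::'k) \<odot>\<^bsub>R\<^esub> \<zero>\<^bsub>R\<^esub>)" by simp
  also have "\<dots> = (0::'k) \<odot>\<^bsub>R1\<^esub> \<iota> \<zero>\<^bsub>R\<^esub>" by (rule iota_sm[symmetric]) simp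
  also have "\<dots> = \<zero>\<^bsub>R1\<^esub>" using R1m.smult_l_null[of "\<iota> \<zero>\<^bsub>R\<^esub>"] iota_car[of "\<zero>\<^bsub>R\<^esub>"] by simp
  finally show ?thesis .
qed

end


context bc begin

definition Phi :: "('a \<times> 'a \<Rightarrow> 'k) \<Rightarrow> 'a" where
  "Phi f = finsum R (\<lambda>p. f p \<odot>\<^bsub>R\<^esub> (fst p \<otimes>\<^bsub>R\<^esub> snd p)) (supp f)"

lemma Phi_super: "finite P \<Longrightarrow> supp f \<subseteq> P \<Longrightarrow> P \<subseteq> carrier R \<times> carrier R \<Longrightarrow>
   Phi f = finsum R (\<lambda>p. f p \<odot>\<^bsub>R\<^esub> (fst p \<otimes>\<^bsub>R\<^esub> snd p)) P"
  unfolding Phi_def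
  by (rule Rr.add.finprod_mono_neutral_cong_left) (auto simp: supp_def)

lemma Phi_car: "f \<in> FS \<Longrightarrow> Phi f \<in> carrier R"
  unfolding Phi_def by (intro Rr.finsum_closed) (auto dest: FS_mem')

lemma Phi_add: "f \<in> FS \<Longrightarrow> g \<in> FS \<Longrightarrow> Phi (\<lambda>p. f p + g p) = Phi f \<oplus>\<^bsub>R\<^esub> Phi g"
proof -
  assume f: "f \<in> FS" and g: "g \<in> FS"
  let ?P = "supp f \<union> supp g"
  have P: "finite ?P" "?P \<subseteq> carrier R \<times> carrier R" using f g by (auto simp: FS_iff)
  have "Phi (\<lambda>p. f p + g p) = finsum R (\<lambda>p. (f p + g p) \<odot>\<^bsub>R\<^esub> (fst p \<otimes>\<^bsub>R\<^esub> snd p)) ?P"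
    using P supp_add[of f g] by (intro Phi_super) auto
  also have "\<dots> = finsum R (\<lambda>p. f p \<odot>\<^bsub>R\<^esub> (fst p \<otimes>\<^bsub>R\<^esub> snd p) \<oplus>\<^bsub>R\<^esub> g p \<odot>\<^bsub>R\<^esub> (fst p \<otimes>\<^bsub>R\<^esub> snd p)) ?P"
    using P by (intro Rr.finsum_cong') (auto simp: sm_ldistr)
  also have "\<dots> = finsum R (\<lambda>p. f p \<odot>\<^bsub>R\<^esub> (fst p \<otimes>\<^bsub>R\<^esub> snd p)) ?P \<oplus>\<^bsub>R\<^esub> finsum R (\<lambda>p. g p \<odot>\<^bsub>R\<^esub> (fst p \<otimes>\<^bsub>R\<^esub> snd p)) ?P"
    using P by (intro Rr.finsum_addf) auto
  also have "\<dots> = Phi f \<oplus>\<^bsub>R\<^esub> Phi g"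
    using P by (simp add: Phi_super[of ?P f] Phi_super[of ?P g])
  finally show ?thesis .
qed

lemma Phi_smul: "f \<in> FS \<Longrightarrow> Phi (\<lambda>p. c * f p) = c \<odot>\<^bsub>R\<^esub> Phi f"
proof -
  assume f: "f \<in> FS"
  let ?P = "supp f"
  have P: "finite ?P" "?P \<subseteq> carrier R \<times> carrier R" using f by (auto simp: FS_iff)
  have "Phi (\<lambda>p. c * f p) = finsum R (\<lambda>p. (c * f p) \<odot>\<^bsub>R\<^esub> (fst p \<otimes>\<^bsub>R\<^esub> snd p)) ?P"
    using P supp_smul[of c f] by (intro Phi_super) auto
  also have "\<dots> = finsum R (\<lambda>p. c \<odot>\<^bsub>R\<^esub> (f p \<odot>\<^bsub>R\<^esub> (fst p \<otimes>\<^bsub>R\<^esub> snd p))) ?P"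
    using P by (intro Rr.finsum_cong') (auto simp: sm_assoc)
  also have "\<dots> = c \<odot>\<^bsub>R\<^esub> Phi f"
    unfolding Phi_def using P by (subst Rm.finsum_smult_ldistr) auto
  finally show ?thesis .
qed

lemma Phi_dlt: "a \<in> carrier R \<Longrightarrow> b \<in> carrier R \<Longrightarrow> Phi (dlt a b) = a \<otimes>\<^bsub>R\<^esub> b"
  unfolding Phi_def supp_dlt by (simp add: dlt_def)

lemma Phi_cancel: "h \<in> FS \<Longrightarrow> G \<in> FS \<Longrightarrow> Phi (\<lambda>p. h p + G p) = Phi G \<Longrightarrow> Phi h = \<zero>\<^bsub>R\<^esub>"
  using Phi_add[of h G] Phi_car[of h] Phi_car[of G] by simp

lemma Phi_V: "h \<in> V \<Longrightarrow> Phi h = \<zero>\<^bsub>R\<^esub>"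
proof (induction rule: tens_rel.induct)
  case zero then show ?case by (simp add: Phi_def supp_def)
next
  case (add f g) then show ?case using V_FS[OF add(1)] V_FS[OF add(2)] by (simp add: Phi_add)
next
  case (smul f c) then show ?case using V_FS[OF smul(1)] by (simp add: Phi_smul)
next
  case (addl a a' b)
  let ?h = "\<lambda>p. dlt (a \<oplus>\<^bsub>R\<^esub> a') b p - dlt a b p - dlt a' b p"
  let ?G = "\<lambda>p. dlt a b p + dlt a' b p"
  have "?h \<in> FS" by (rule V_FS, rule tens_rel.addl) (use addl in auto)
  moreover have G: "?G \<in> FS" using addl by auto
  moreover have "Phi (\<lambda>p. ?h p + ?G p) = Phi ?G"
    using addl by (simp add: Phi_dlt Phi_add Rr.l_distr FS_dlt)
  ultimately show ?case by (rule Phi_cancel)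
next
  case (addr a b b')
  let ?h = "\<lambda>p. dlt a (b \<oplus>\<^bsub>R\<^esub> b') p - dlt a b p - dlt a b' p"
  let ?G = "\<lambda>p. dlt a b p + dlt a b' p"
  have "?h \<in> FS" by (rule V_FS, rule tens_rel.addr) (use addr in auto)
  moreover have G: "?G \<in> FS" using addr by auto
  moreover have "Phi (\<lambda>p. ?h p + ?G p) = Phi ?G"
    using addr by (simp add: Phi_dlt Phi_add Rr.r_distr FS_dlt)
  ultimately show ?case by (rule Phi_cancel)
next
  case (scl a b c)
  let ?h = "\<lambda>p. dlt (c \<odot>\<^bsub>R\<^esub> a) b p - c * dlt a b p"
  let ?G = "\<lambda>p. c * dlt a b p"
  have "?h \<in> FS" by (rule V_FS, rule tens_rel.scl) (use scl in auto)
  moreover have G: "?G \<in> FS" using scl by auto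
  moreover have "Phi (\<lambda>p. ?h p + ?G p) = Phi ?G"
    using scl by (simp add: Phi_dlt Phi_smul sm_mult_l FS_dlt)
  ultimately show ?case by (rule Phi_cancel)
next
  case (scr a b c)
  let ?h = "\<lambda>p. dlt a (c \<odot>\<^bsub>R\<^esub> b) p - c * dlt a b p"
  let ?G = "\<lambda>p. c * dlt a b p"
  have "?h \<in> FS" by (rule V_FS, rule tens_rel.scr) (use scr in auto)
  moreover have G: "?G \<in> FS" using scr by auto
  moreover have "Phi (\<lambda>p. ?h p + ?G p) = Phi ?G"
    using scr by (simp add: Phi_dlt Phi_smul sm_mult_r FS_dlt)
  ultimately show ?case by (rule Phi_cancel)
next
  case (bal a b s')
  have s': "s' \<in> carrier R" using bal S_sub by auto
  let ?h = "\<lambda>p. dlt (a \<otimes>\<^bsub>R\<^esub> s') b p - dlt a (s' \<otimes>\<^bsub>R\<^esub> b) p"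
  let ?G = "dlt a (s' \<otimes>\<^bsub>R\<^esub> b)"
  have "?h \<in> FS" by (rule V_FS, rule tens_rel.bal) (use bal in auto)
  moreover have G: "?G \<in> FS" using bal s' by auto
  moreover have "Phi (\<lambda>p. ?h p + ?G p) = Phi ?G"
    using bal s' by (simp add: Phi_dlt Rr.m_assoc)
  ultimately show ?case by (rule Phi_cancel)
qed

lemma Phi_eqv: "f \<in> FS \<Longrightarrow> g \<in> FS \<Longrightarrow> eqv f g \<Longrightarrow> Phi f = Phi g"
proof -
  assume f: "f \<in> FS" and g: "g \<in> FS" and e: "eqv f g"
  have h: "(\<lambda>p. f p - g p) \<in> V" using e by (simp add: eqv_def)
  have "Phi f = Phi (\<lambda>p. g p + (f p - g p))" by simp
  also have "\<dots> = Phi g \<oplus>\<^bsub>R\<^esub> Phi (\<lambda>p. f p - g p)" using g V_FS[OF h] by (rule Phi_add)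
  also have "\<dots> = Phi g" using Phi_V[OF h] Phi_car[OF g] by simp
  finally show ?thesis .
qed

lemma Phi_dsum: "finite I \<Longrightarrow> (\<And>i. i \<in> I \<Longrightarrow> x i \<in> carrier R \<and> y i \<in> carrier R) \<Longrightarrow>
  Phi (dsum I c x y) = finsum R (\<lambda>i. c i \<odot>\<^bsub>R\<^esub> (x i \<otimes>\<^bsub>R\<^esub> y i)) I"
proof (induction I rule: finite_induct)
  case empty then show ?case by (simp add: dsum_def Phi_def supp_def)
next
  case (insert j I)
  have e: "dsum (insert j I) c x y = (\<lambda>p. c j * dlt (x j) (y j) p + dsum I c x y p)"
    using insert by (simp add: dsum_def)
  have "Phi (dsum (insert j I) c x y) = c j \<odot>\<^bsub>R\<^esub> (x j \<otimes>\<^bsub>R\<^esub> y j) \<oplus>\<^bsub>R\<^esub> Phi (dsum I c x y)"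
    unfolding e using insert by (subst Phi_add) (auto simp: Phi_smul Phi_dlt FS_dlt intro!: FS_dsum)
  then show ?case using insert by (simp add: Rr.finsum_insert)
qed

abbreviation "ER \<equiv> bc_cond R lam"

lemma ER_cls: "f \<in> FS \<Longrightarrow> ER (cls f) = lam \<odot>\<^bsub>R\<^esub> Phi f"
  unfolding bc_cond_def Phi_def[symmetric]
  using rep_cls[of f] by (simp add: Phi_eqv eqv_sym)

lemma ER_car: "U \<in> carrier R1 \<Longrightarrow> ER U \<in> carrier R"
  by (elim car1E) (simp add: ER_cls Phi_car)

lemma ER_add: "U \<in> carrier R1 \<Longrightarrow> Y \<in> carrier R1 \<Longrightarrow> ER (U \<oplus>\<^bsub>R1\<^esub> Y) = ER U \<oplus>\<^bsub>R\<^esub> ER Y"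
  by (elim car1E) (simp add: add1 ER_cls FS_add Phi_add sm_rdistr Phi_car)

lemma ER_one: "ER \<one>\<^bsub>R1\<^esub> = \<one>\<^bsub>R\<^esub>"
proof -
  have "Phi u1 = finsum R (\<lambda>i. 1 \<odot>\<^bsub>R\<^esub> (r i \<otimes>\<^bsub>R\<^esub> s i)) {..<n}"
    unfolding u1_dsum by (rule Phi_dsum) auto
  also have "\<dots> = inverse lam \<odot>\<^bsub>R\<^esub> \<one>\<^bsub>R\<^esub>"
    using rs_sum by (subst Rr.finsum_cong'[of _ _ "\<lambda>i. r i \<otimes>\<^bsub>R\<^esub> s i"]) auto
  finally show ?thesis using lam_nz
    by (simp add: one1 ER_cls u1_FS sm_assoc[symmetric])
qed

end


context bc begin

lemma ER_left: assumes a: "a \<in> carrier R" and U: "U \<in> carrier R1"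
  shows "ER (\<iota> a \<otimes>\<^bsub>R1\<^esub> U) = a \<otimes>\<^bsub>R\<^esub> ER U"
  using U
proof (elim car1E)
  fix f assume f: "f \<in> FS" and Uf: "U = cls f"
  have ff: "finite (supp f)" using f FS_fin by auto
  have c: "\<And>q. q \<in> supp f \<Longrightarrow> fst q \<in> carrier R \<and> snd q \<in> carrier R" using f FS_mem' by auto
  let ?g = "dsum (supp f) f (\<lambda>q. a \<otimes>\<^bsub>R\<^esub> fst q) snd"
  have gFS: "?g \<in> FS" using ff c a by (intro FS_dsum) auto
  have "eqv (mm (iota_f a) (dsum (supp f) f fst snd)) ?g"
    using a ff c by (intro L_iota) auto
  then have e: "\<iota> a \<otimes>\<^bsub>R1\<^esub> U = cls ?g"
    unfolding Uf iota_cls using expand[OF ff] a f gFS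
    by (simp add: mul1 iota_f_FS mm_FS cls_eqI)
  have "ER (cls ?g) = lam \<odot>\<^bsub>R\<^esub> finsum R (\<lambda>q. f q \<odot>\<^bsub>R\<^esub> (a \<otimes>\<^bsub>R\<^esub> fst q \<otimes>\<^bsub>R\<^esub> snd q)) (supp f)"
    using gFS ff c a by (simp add: ER_cls Phi_dsum)
  also have "\<dots> = lam \<odot>\<^bsub>R\<^esub> (a \<otimes>\<^bsub>R\<^esub> finsum R (\<lambda>q. f q \<odot>\<^bsub>R\<^esub> (fst q \<otimes>\<^bsub>R\<^esub> snd q)) (supp f))"
  proof -
    have "a \<otimes>\<^bsub>R\<^esub> finsum R (\<lambda>q. f q \<odot>\<^bsub>R\<^esub> (fst q \<otimes>\<^bsub>R\<^esub> snd q)) (supp f) =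
      finsum R (\<lambda>q. a \<otimes>\<^bsub>R\<^esub> (f q \<odot>\<^bsub>R\<^esub> (fst q \<otimes>\<^bsub>R\<^esub> snd q))) (supp f)"
      using ff c a by (intro Rr.finsum_rdistr) auto
    also have "\<dots> = finsum R (\<lambda>q. f q \<odot>\<^bsub>R\<^esub> (a \<otimes>\<^bsub>R\<^esub> fst q \<otimes>\<^bsub>R\<^esub> snd q)) (supp f)"
      using c a by (intro Rr.finsum_cong') (auto simp: sm_mult_r Rr.m_assoc)
    finally show ?thesis by simp
  qed
  also have "\<dots> = a \<otimes>\<^bsub>R\<^esub> (lam \<odot>\<^bsub>R\<^esub> Phi (dsum (supp f) f fst snd))"
  proof -
    have fc: "finsum R (\<lambda>q. f q \<odot>\<^bsub>R\<^esub> (fst q \<otimes>\<^bsub>R\<^esub> snd q)) (supp f) \<in> carrier R"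
      using c by (intro Rr.finsum_closed) auto
    show ?thesis using ff c a by (simp add: Phi_dsum sm_mult_r[OF a fc])
  qed
  also have "\<dots> = a \<otimes>\<^bsub>R\<^esub> ER U"
    using expand[OF ff] Uf f by (simp add: ER_cls)
  finally show ?thesis using e by simp
qed

lemma ER_right: assumes a: "a \<in> carrier R" and U: "U \<in> carrier R1"
  shows "ER (U \<otimes>\<^bsub>R1\<^esub> \<iota> a) = ER U \<otimes>\<^bsub>R\<^esub> a"
  using U
proof (elim car1E)
  fix f assume f: "f \<in> FS" and Uf: "U = cls f"
  have ff: "finite (supp f)" using f FS_fin by auto
  have c: "\<And>q. q \<in> supp f \<Longrightarrow> fst q \<in> carrier R \<and> snd q \<in> carrier R" using f FS_mem' by auto
  let ?g = "dsum (supp f) f fst (\<lambda>q. snd q \<otimes>\<^bsub>R\<^esub> a)"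
  have gFS: "?g \<in> FS" using ff c a by (intro FS_dsum) auto
  have "eqv (mm (dsum (supp f) f fst snd) (iota_f a)) ?g"
    using a ff c by (intro R_iota) auto
  then have e: "U \<otimes>\<^bsub>R1\<^esub> \<iota> a = cls ?g"
    unfolding Uf iota_cls using expand[OF ff] a f gFS
    by (simp add: mul1 iota_f_FS mm_FS cls_eqI)
  have "ER (cls ?g) = lam \<odot>\<^bsub>R\<^esub> finsum R (\<lambda>q. f q \<odot>\<^bsub>R\<^esub> (fst q \<otimes>\<^bsub>R\<^esub> (snd q \<otimes>\<^bsub>R\<^esub> a))) (supp f)"
    using gFS ff c a by (simp add: ER_cls Phi_dsum)
  also have "\<dots> = lam \<odot>\<^bsub>R\<^esub> (finsum R (\<lambda>q. f q \<odot>\<^bsub>R\<^esub> (fst q \<otimes>\<^bsub>R\<^esub> snd q)) (supp f) \<otimes>\<^bsub>R\<^esub> a)"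
  proof -
    have "finsum R (\<lambda>q. f q \<odot>\<^bsub>R\<^esub> (fst q \<otimes>\<^bsub>R\<^esub> snd q)) (supp f) \<otimes>\<^bsub>R\<^esub> a =
      finsum R (\<lambda>q. (f q \<odot>\<^bsub>R\<^esub> (fst q \<otimes>\<^bsub>R\<^esub> snd q)) \<otimes>\<^bsub>R\<^esub> a) (supp f)"
      using ff c a by (intro Rr.finsum_ldistr) auto
    also have "\<dots> = finsum R (\<lambda>q. f q \<odot>\<^bsub>R\<^esub> (fst q \<otimes>\<^bsub>R\<^esub> (snd q \<otimes>\<^bsub>R\<^esub> a))) (supp f)"
      using c a by (intro Rr.finsum_cong') (auto simp: sm_mult_l Rr.m_assoc)
    finally show ?thesis by simp
  qed
  also have "\<dots> = (lam \<odot>\<^bsub>R\<^esub> Phi (dsum (supp f) f fst snd)) \<otimes>\<^bsub>R\<^esub> a"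
  proof -
    have fc: "finsum R (\<lambda>q. f q \<odot>\<^bsub>R\<^esub> (fst q \<otimes>\<^bsub>R\<^esub> snd q)) (supp f) \<in> carrier R"
      using c by (intro Rr.finsum_closed) auto
    show ?thesis using ff c a by (simp add: Phi_dsum sm_mult_l[OF fc a])
  qed
  also have "\<dots> = ER U \<otimes>\<^bsub>R\<^esub> a"
    using expand[OF ff] Uf f by (simp add: ER_cls)
  finally show ?thesis using e by simp
qed

lemma finsum1: "finite I \<Longrightarrow> (\<And>i. i \<in> I \<Longrightarrow> F i \<in> FS) \<Longrightarrow>
  finsum R1 (\<lambda>i. cls (F i)) I = cls (\<lambda>p. \<Sum>i\<in>I. F i p)"
proof (induction I rule: finite_induct)
  case empty then show ?case by (simp add: zero1)
next
  case (insert j I)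
  have "finsum R1 (\<lambda>i. cls (F i)) (insert j I) = cls (F j) \<oplus>\<^bsub>R1\<^esub> finsum R1 (\<lambda>i. cls (F i)) I"
    using insert by (intro R1r.finsum_insert) auto
  also have "\<dots> = cls (\<lambda>p. F j p + (\<Sum>i\<in>I. F i p))"
    using insert by (simp add: add1 FS_sum)
  finally show ?case using insert by simp
qed

lemma dlt_dsum: "dlt a b = dsum {0::nat} (\<lambda>_. 1) (\<lambda>_. a) (\<lambda>_. b)"
  by (simp add: dsum_def)

lemma mm_dlt_dlt: "mm (dlt a b) (dlt c d) = dlt (a \<otimes>\<^bsub>R\<^esub> E (b \<otimes>\<^bsub>R\<^esub> c)) d"
  by (simp add: mm_dlt_left) (simp add: dlt_def)

lemma iota_dlt_left: "a \<in> carrier R \<Longrightarrow> x \<in> carrier R \<Longrightarrow> y \<in> carrier R \<Longrightarrow>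
   \<iota> a \<otimes>\<^bsub>R1\<^esub> cls (dlt x y) = cls (dlt (a \<otimes>\<^bsub>R\<^esub> x) y)"
  using L_iota[of a "{0::nat}" "\<lambda>_. x" "\<lambda>_. y" "\<lambda>_. 1"]
  by (simp add: iota_cls mul1 iota_f_FS FS_dlt mm_FS cls_eqI dlt_dsum[symmetric])

lemma iota_dlt_right: "a \<in> carrier R \<Longrightarrow> x \<in> carrier R \<Longrightarrow> y \<in> carrier R \<Longrightarrow>
   cls (dlt x y) \<otimes>\<^bsub>R1\<^esub> \<iota> a = cls (dlt x (y \<otimes>\<^bsub>R\<^esub> a))"
  using R_iota[of a "{0::nat}" "\<lambda>_. x" "\<lambda>_. y" "\<lambda>_. 1"]
  by (simp add: iota_cls mul1 iota_f_FS FS_dlt mm_FS cls_eqI dlt_dsum[symmetric])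

end


context bc begin

definition r1 :: "nat \<Rightarrow> ('a \<times> 'a \<Rightarrow> 'k) set" where
  "r1 i = cls (dlt (inverse lam \<odot>\<^bsub>R\<^esub> r i) \<one>\<^bsub>R\<^esub>)"
definition s1 :: "nat \<Rightarrow> ('a \<times> 'a \<Rightarrow> 'k) set" where
  "s1 i = cls (dlt \<one>\<^bsub>R\<^esub> (s i))"

lemma r1_car: "i < n \<Longrightarrow> r1 i \<in> carrier R1" by (simp add: r1_def FS_dlt)
lemma s1_car: "i < n \<Longrightarrow> s1 i \<in> carrier R1" by (simp add: s1_def FS_dlt)

lemma sm_inv: "a \<in> carrier R \<Longrightarrow> lam \<odot>\<^bsub>R\<^esub> (inverse lam \<odot>\<^bsub>R\<^esub> a) = a"
  using lam_nz by (simp add: sm_assoc[symmetric])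

lemma ER_r1: assumes f: "f \<in> FS" and i: "i < n"
  shows "ER (cls f \<otimes>\<^bsub>R1\<^esub> r1 i) = finsum R (\<lambda>p. f p \<odot>\<^bsub>R\<^esub> (fst p \<otimes>\<^bsub>R\<^esub> E (snd p \<otimes>\<^bsub>R\<^esub> r i))) (supp f)"
proof -
  have ff: "finite (supp f)" using f FS_fin by auto
  have c: "\<And>q. q \<in> supp f \<Longrightarrow> fst q \<in> carrier R \<and> snd q \<in> carrier R" using f FS_mem' by auto
  let ?x = "inverse lam \<odot>\<^bsub>R\<^esub> r i"
  let ?g = "dsum (supp f) f (\<lambda>p. fst p \<otimes>\<^bsub>R\<^esub> E (snd p \<otimes>\<^bsub>R\<^esub> ?x)) (\<lambda>_. \<one>\<^bsub>R\<^esub>)"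
  have gFS: "?g \<in> FS" using ff c i by (intro FS_dsum) auto
  have "cls f \<otimes>\<^bsub>R1\<^esub> r1 i = cls ?g"
    unfolding r1_def using f i by (simp add: mul1 FS_dlt mm_dlt_right dsum_def)
  then have "ER (cls f \<otimes>\<^bsub>R1\<^esub> r1 i) = lam \<odot>\<^bsub>R\<^esub> finsum R (\<lambda>p. f p \<odot>\<^bsub>R\<^esub> (fst p \<otimes>\<^bsub>R\<^esub> E (snd p \<otimes>\<^bsub>R\<^esub> ?x) \<otimes>\<^bsub>R\<^esub> \<one>\<^bsub>R\<^esub>)) (supp f)"
    using gFS ff c i by (simp add: ER_cls Phi_dsum)
  also have "\<dots> = lam \<odot>\<^bsub>R\<^esub> finsum R (\<lambda>p. inverse lam \<odot>\<^bsub>R\<^esub> (f p \<odot>\<^bsub>R\<^esub> (fst p \<otimes>\<^bsub>R\<^esub> E (snd p \<otimes>\<^bsub>R\<^esub> r i)))) (supp f)"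
    using c i by (intro arg_cong[where f="\<lambda>z. lam \<odot>\<^bsub>R\<^esub> z"] Rr.finsum_cong')
      (auto simp: sm_mult_r E_sm sm_assoc[symmetric] mult.commute)
  also have "\<dots> = finsum R (\<lambda>p. f p \<odot>\<^bsub>R\<^esub> (fst p \<otimes>\<^bsub>R\<^esub> E (snd p \<otimes>\<^bsub>R\<^esub> r i))) (supp f)"
    using c i ff by (subst Rm.finsum_smult_ldistr[symmetric]) (auto intro!: sm_inv Rr.finsum_closed)
  finally show ?thesis .
qed

lemma ER_s1: assumes f: "f \<in> FS" and i: "i < n"
  shows "ER (s1 i \<otimes>\<^bsub>R1\<^esub> cls f) = lam \<odot>\<^bsub>R\<^esub> finsum R (\<lambda>q. f q \<odot>\<^bsub>R\<^esub> (E (s i \<otimes>\<^bsub>R\<^esub> fst q) \<otimes>\<^bsub>R\<^esub> snd q)) (supp f)"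
proof -
  have ff: "finite (supp f)" using f FS_fin by auto
  have c: "\<And>q. q \<in> supp f \<Longrightarrow> fst q \<in> carrier R \<and> snd q \<in> carrier R" using f FS_mem' by auto
  let ?g = "dsum (supp f) f (\<lambda>q. \<one>\<^bsub>R\<^esub> \<otimes>\<^bsub>R\<^esub> E (s i \<otimes>\<^bsub>R\<^esub> fst q)) snd"
  have gFS: "?g \<in> FS" using ff c i by (intro FS_dsum) auto
  have "s1 i \<otimes>\<^bsub>R1\<^esub> cls f = cls ?g"
    unfolding s1_def using f i by (simp add: mul1 FS_dlt mm_dlt_left dsum_def)
  then have "ER (s1 i \<otimes>\<^bsub>R1\<^esub> cls f) = lam \<odot>\<^bsub>R\<^esub> finsum R (\<lambda>q. f q \<odot>\<^bsub>R\<^esub> ((\<one>\<^bsub>R\<^esub> \<otimes>\<^bsub>R\<^esub> E (s i \<otimes>\<^bsub>R\<^esub> fst q)) \<otimes>\<^bsub>R\<^esub> snd q)) (supp f)"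
    using gFS ff c i by (simp add: ER_cls Phi_dsum)
  also have "\<dots> = lam \<odot>\<^bsub>R\<^esub> finsum R (\<lambda>q. f q \<odot>\<^bsub>R\<^esub> (E (s i \<otimes>\<^bsub>R\<^esub> fst q) \<otimes>\<^bsub>R\<^esub> snd q)) (supp f)"
    using c i by (intro arg_cong[where f="\<lambda>z. lam \<odot>\<^bsub>R\<^esub> z"] Rr.finsum_cong') auto
  finally show ?thesis .
qed

end


context bc begin

lemma collapse_right1: "x \<in> carrier R \<Longrightarrow> y \<in> carrier R \<Longrightarrow>
  eqv (\<lambda>t. \<Sum>i<n. dlt (x \<otimes>\<^bsub>R\<^esub> E (y \<otimes>\<^bsub>R\<^esub> r i)) (s i) t) (dlt x y)"
  using collapse_right[of x y "\<one>\<^bsub>R\<^esub>"] by simp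
lemma collapse_left1: "x \<in> carrier R \<Longrightarrow> y \<in> carrier R \<Longrightarrow>
  eqv (\<lambda>t. \<Sum>i<n. dlt (r i \<otimes>\<^bsub>R\<^esub> E (s i \<otimes>\<^bsub>R\<^esub> x)) y t) (dlt x y)"
proof -
  assume x: "x \<in> carrier R" and y: "y \<in> carrier R"
  have "(\<lambda>t. \<Sum>i<n. dlt (r i \<otimes>\<^bsub>R\<^esub> E (s i \<otimes>\<^bsub>R\<^esub> x)) y t) = (\<lambda>t. \<Sum>i<n. dlt (\<one>\<^bsub>R\<^esub> \<otimes>\<^bsub>R\<^esub> r i \<otimes>\<^bsub>R\<^esub> E (s i \<otimes>\<^bsub>R\<^esub> x)) y t)"
    by (intro ext sum.cong refl) simp
  then show ?thesis using collapse_left[of x y "\<one>\<^bsub>R\<^esub>"] x y by simp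
qed

lemma eqv_dlt_fsum_l: assumes ff: "finite P" and c: "\<And>p. p \<in> P \<Longrightarrow> Xf p \<in> carrier R" and b: "b \<in> carrier R"
  shows "eqv (dlt (finsum R (\<lambda>p. f p \<odot>\<^bsub>R\<^esub> Xf p) P) b) (\<lambda>t. \<Sum>p\<in>P. f p * dlt (Xf p) b t)"
proof -
  have "eqv (dlt (finsum R (\<lambda>p. f p \<odot>\<^bsub>R\<^esub> Xf p) P) b) (\<lambda>t. \<Sum>p\<in>P. dlt (f p \<odot>\<^bsub>R\<^esub> Xf p) b t)"
    using ff c b by (intro eqv_sym[OF eqv_dlt_sum_l]) auto
  also have "eqv \<dots> (\<lambda>t. \<Sum>p\<in>P. f p * dlt (Xf p) b t)"
    using ff c b by (intro eqv_sum eqv_scl) auto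
  finally show ?thesis .
qed

lemma eqv_dlt_fsum_r: assumes ff: "finite P" and c: "\<And>p. p \<in> P \<Longrightarrow> Xf p \<in> carrier R" and a: "a \<in> carrier R"
  shows "eqv (dlt a (finsum R (\<lambda>p. f p \<odot>\<^bsub>R\<^esub> Xf p) P)) (\<lambda>t. \<Sum>p\<in>P. f p * dlt a (Xf p) t)"
proof -
  have "eqv (dlt a (finsum R (\<lambda>p. f p \<odot>\<^bsub>R\<^esub> Xf p) P)) (\<lambda>t. \<Sum>p\<in>P. dlt a (f p \<odot>\<^bsub>R\<^esub> Xf p) t)"
    using ff c a by (intro eqv_sym[OF eqv_dlt_sum_r]) auto
  also have "eqv \<dots> (\<lambda>t. \<Sum>p\<in>P. f p * dlt a (Xf p) t)"
    using ff c a by (intro eqv_sum eqv_scr) auto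
  finally show ?thesis .
qed

lemma next_dual1: assumes U: "U \<in> carrier R1"
  shows "finsum R1 (\<lambda>i. (\<iota> \<circ> ER) (U \<otimes>\<^bsub>R1\<^esub> r1 i) \<otimes>\<^bsub>R1\<^esub> s1 i) {..<n} = U"
  using U
proof (elim car1E)
  fix f assume f: "f \<in> FS" and Uf: "U = cls f"
  have ff: "finite (supp f)" using f FS_fin by auto
  have c: "\<And>q. q \<in> supp f \<Longrightarrow> fst q \<in> carrier R \<and> snd q \<in> carrier R" using f FS_mem' by auto
  define m where "m i = finsum R (\<lambda>p. f p \<odot>\<^bsub>R\<^esub> (fst p \<otimes>\<^bsub>R\<^esub> E (snd p \<otimes>\<^bsub>R\<^esub> r i))) (supp f)" for i
  have mc: "i < n \<Longrightarrow> m i \<in> carrier R" for i unfolding m_def using c by (intro Rr.finsum_closed) auto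
  have "finsum R1 (\<lambda>i. (\<iota> \<circ> ER) (U \<otimes>\<^bsub>R1\<^esub> r1 i) \<otimes>\<^bsub>R1\<^esub> s1 i) {..<n} = finsum R1 (\<lambda>i. cls (dlt (m i) (s i))) {..<n}"
  proof (intro R1r.finsum_cong')
    fix i assume "i \<in> {..<n}"
    then have i: "i < n" by simp
    show "(\<iota> \<circ> ER) (U \<otimes>\<^bsub>R1\<^esub> r1 i) \<otimes>\<^bsub>R1\<^esub> s1 i = cls (dlt (m i) (s i))"
      using ER_r1[OF f i] iota_dlt_left[OF mc[OF i], of "\<one>\<^bsub>R\<^esub>" "s i"] i mc[OF i]
      by (simp add: Uf m_def[symmetric] s1_def)
  qed (auto simp: FS_dlt mc)
  also have "\<dots> = cls (\<lambda>t. \<Sum>i<n. dlt (m i) (s i) t)"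
    using mc by (intro finsum1) (auto simp: FS_dlt)
  also have "\<dots> = cls f"
  proof (rule cls_eqI)
    show "(\<lambda>t. \<Sum>i<n. dlt (m i) (s i) t) \<in> FS" using mc by (intro FS_sum FS_dlt) auto
    show "f \<in> FS" by (rule f)
    have "eqv (\<lambda>t. \<Sum>i<n. dlt (m i) (s i) t)
       (\<lambda>t. \<Sum>i<n. \<Sum>p\<in>supp f. f p * dlt (fst p \<otimes>\<^bsub>R\<^esub> E (snd p \<otimes>\<^bsub>R\<^esub> r i)) (s i) t)"
      unfolding m_def using ff c by (intro eqv_sum eqv_dlt_fsum_l) auto
    also have "\<dots> = (\<lambda>t. \<Sum>p\<in>supp f. f p * (\<Sum>i<n. dlt (fst p \<otimes>\<^bsub>R\<^esub> E (snd p \<otimes>\<^bsub>R\<^esub> r i)) (s i) t))"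
      by (rule ext, subst sum.swap) (simp add: sum_distrib_left)
    also have "eqv \<dots> (\<lambda>t. \<Sum>p\<in>supp f. f p * dlt (fst p) (snd p) t)"
      using ff c by (intro eqv_sum eqv_smul collapse_right1) auto
    also have "\<dots> = f" using expand[OF ff] by (simp add: dsum_def)
    finally show "eqv (\<lambda>t. \<Sum>i<n. dlt (m i) (s i) t) f" .
  qed
  finally show ?thesis using Uf by simp
qed

end


context bc begin

lemma next_dual2: assumes U: "U \<in> carrier R1"
  shows "finsum R1 (\<lambda>i. r1 i \<otimes>\<^bsub>R1\<^esub> (\<iota> \<circ> ER) (s1 i \<otimes>\<^bsub>R1\<^esub> U)) {..<n} = U"
  using U
proof (elim car1E)
  fix f assume f: "f \<in> FS" and Uf: "U = cls f"
  have ff: "finite (supp f)" using f FS_fin by auto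
  have c: "\<And>q. q \<in> supp f \<Longrightarrow> fst q \<in> carrier R \<and> snd q \<in> carrier R" using f FS_mem' by auto
  define w where "w i = finsum R (\<lambda>q. f q \<odot>\<^bsub>R\<^esub> (E (s i \<otimes>\<^bsub>R\<^esub> fst q) \<otimes>\<^bsub>R\<^esub> snd q)) (supp f)" for i
  have wc: "i < n \<Longrightarrow> w i \<in> carrier R" for i unfolding w_def using c by (intro Rr.finsum_closed) auto
  let ?il = "inverse lam"
  have "finsum R1 (\<lambda>i. r1 i \<otimes>\<^bsub>R1\<^esub> (\<iota> \<circ> ER) (s1 i \<otimes>\<^bsub>R1\<^esub> U)) {..<n} =
     finsum R1 (\<lambda>i. cls (dlt (?il \<odot>\<^bsub>R\<^esub> r i) (lam \<odot>\<^bsub>R\<^esub> w i))) {..<n}"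
  proof (intro R1r.finsum_cong')
    fix i assume "i \<in> {..<n}"
    then have i: "i < n" by simp
    show "r1 i \<otimes>\<^bsub>R1\<^esub> (\<iota> \<circ> ER) (s1 i \<otimes>\<^bsub>R1\<^esub> U) = cls (dlt (?il \<odot>\<^bsub>R\<^esub> r i) (lam \<odot>\<^bsub>R\<^esub> w i))"
      using ER_s1[OF f i] iota_dlt_right[of "lam \<odot>\<^bsub>R\<^esub> w i" "?il \<odot>\<^bsub>R\<^esub> r i" "\<one>\<^bsub>R\<^esub>"] i wc[OF i]
      by (simp add: Uf w_def[symmetric] r1_def)
  qed (auto simp: FS_dlt wc)
  also have "\<dots> = cls (\<lambda>t. \<Sum>i<n. dlt (?il \<odot>\<^bsub>R\<^esub> r i) (lam \<odot>\<^bsub>R\<^esub> w i) t)"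
    using wc by (intro finsum1) (auto simp: FS_dlt)
  also have "\<dots> = cls f"
  proof (rule cls_eqI)
    show "(\<lambda>t. \<Sum>i<n. dlt (?il \<odot>\<^bsub>R\<^esub> r i) (lam \<odot>\<^bsub>R\<^esub> w i) t) \<in> FS" using wc by (intro FS_sum FS_dlt) auto
    show "f \<in> FS" by (rule f)
    have "eqv (\<lambda>t. \<Sum>i<n. dlt (?il \<odot>\<^bsub>R\<^esub> r i) (lam \<odot>\<^bsub>R\<^esub> w i) t) (\<lambda>t. \<Sum>i<n. dlt (r i) (w i) t)"
    proof (intro eqv_sum)
      fix i assume "i \<in> {..<n}"
      then have i: "i < n" by simp
      have "eqv (dlt (?il \<odot>\<^bsub>R\<^esub> r i) (lam \<odot>\<^bsub>R\<^esub> w i)) (\<lambda>t. ?il * dlt (r i) (lam \<odot>\<^bsub>R\<^esub> w i) t)"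
        using i wc[OF i] by (intro eqv_scl) auto
      also have "eqv \<dots> (\<lambda>t. ?il * (lam * dlt (r i) (w i) t))"
        using i wc[OF i] by (intro eqv_smul eqv_scr) auto
      also have "\<dots> = dlt (r i) (w i)" using lam_nz by (simp add: mult.assoc[symmetric])
      finally show "eqv (dlt (?il \<odot>\<^bsub>R\<^esub> r i) (lam \<odot>\<^bsub>R\<^esub> w i)) (dlt (r i) (w i))" .
    qed simp
    also have "eqv \<dots> (\<lambda>t. \<Sum>i<n. \<Sum>q\<in>supp f. f q * dlt (r i) (E (s i \<otimes>\<^bsub>R\<^esub> fst q) \<otimes>\<^bsub>R\<^esub> snd q) t)"
      unfolding w_def using ff c by (intro eqv_sum eqv_dlt_fsum_r) auto
    also have "eqv \<dots> (\<lambda>t. \<Sum>i<n. \<Sum>q\<in>supp f. f q * dlt (r i \<otimes>\<^bsub>R\<^esub> E (s i \<otimes>\<^bsub>R\<^esub> fst q)) (snd q) t)"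
      using ff c E_S by (intro eqv_sum eqv_smul eqv_sym[OF eqv_bal]) auto
    also have "\<dots> = (\<lambda>t. \<Sum>q\<in>supp f. f q * (\<Sum>i<n. dlt (r i \<otimes>\<^bsub>R\<^esub> E (s i \<otimes>\<^bsub>R\<^esub> fst q)) (snd q) t))"
      by (rule ext, subst sum.swap) (simp add: sum_distrib_left)
    also have "eqv \<dots> (\<lambda>t. \<Sum>q\<in>supp f. f q * dlt (fst q) (snd q) t)"
      using ff c by (intro eqv_sum eqv_smul collapse_left1) auto
    also have "\<dots> = f" using expand[OF ff] by (simp add: dsum_def)
    finally show "eqv (\<lambda>t. \<Sum>i<n. dlt (?il \<odot>\<^bsub>R\<^esub> r i) (lam \<odot>\<^bsub>R\<^esub> w i) t) f" .
  qed
  finally show ?thesis using Uf by simp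
qed

lemma next_rs_sum: "finsum R1 (\<lambda>i. r1 i \<otimes>\<^bsub>R1\<^esub> s1 i) {..<n} = inverse lam \<odot>\<^bsub>R1\<^esub> \<one>\<^bsub>R1\<^esub>"
proof -
  let ?il = "inverse lam"
  have "finsum R1 (\<lambda>i. r1 i \<otimes>\<^bsub>R1\<^esub> s1 i) {..<n} = finsum R1 (\<lambda>i. cls (dlt (?il \<odot>\<^bsub>R\<^esub> r i) (s i))) {..<n}"
    by (intro R1r.finsum_cong') (auto simp: r1_def s1_def mul1 FS_dlt mm_dlt_dlt E_one)
  also have "\<dots> = cls (\<lambda>t. \<Sum>i<n. dlt (?il \<odot>\<^bsub>R\<^esub> r i) (s i) t)"
    by (intro finsum1) (auto simp: FS_dlt)
  also have "\<dots> = cls (\<lambda>p. ?il * u1 p)"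
  proof (rule cls_eqI)
    show "(\<lambda>t. \<Sum>i<n. dlt (?il \<odot>\<^bsub>R\<^esub> r i) (s i) t) \<in> FS" by (intro FS_sum FS_dlt) auto
    show "(\<lambda>p. ?il * u1 p) \<in> FS" using u1_FS by (rule FS_smul)
    have "eqv (\<lambda>t. \<Sum>i<n. dlt (?il \<odot>\<^bsub>R\<^esub> r i) (s i) t) (\<lambda>t. \<Sum>i<n. ?il * dlt (r i) (s i) t)"
      by (intro eqv_sum eqv_scl) auto
    also have "\<dots> = (\<lambda>p. ?il * u1 p)" by (simp add: u1_def sum_distrib_left)
    finally show "eqv (\<lambda>t. \<Sum>i<n. dlt (?il \<odot>\<^bsub>R\<^esub> r i) (s i) t) (\<lambda>p. ?il * u1 p)" .
  qed
  also have "\<dots> = ?il \<odot>\<^bsub>R1\<^esub> \<one>\<^bsub>R1\<^esub>" by (simp add: one1 sm1 u1_FS)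
  finally show ?thesis .
qed

end


context bc begin

lemma bc_next: "bc R1 (\<iota> ` carrier R) (\<iota> \<circ> ER) r1 s1 n lam"
proof (unfold_locales)
  show "kalg R1" by (rule kalg1)
  show "subalg (\<iota> ` carrier R) R1"
    unfolding subalg_def
  proof (intro conjI ballI allI)
    show "\<iota> ` carrier R \<subseteq> carrier R1" using iota_car by auto
    show "\<one>\<^bsub>R1\<^esub> \<in> \<iota> ` carrier R" using iota_one by (metis Rr.one_closed image_eqI)
    show "\<zero>\<^bsub>R1\<^esub> \<in> \<iota> ` carrier R" using iota_zero by (metis Rr.zero_closed image_eqI)
    fix a b assume "a \<in> \<iota> ` carrier R" "b \<in> \<iota> ` carrier R"
    then obtain x y where x: "x \<in> carrier R" "a = \<iota> x" and y: "y \<in> carrier R" "b = \<iota> y" by auto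
    show "a \<oplus>\<^bsub>R1\<^esub> b \<in> \<iota> ` carrier R" using x y iota_add[of x y] by auto
    show "a \<otimes>\<^bsub>R1\<^esub> b \<in> \<iota> ` carrier R" using x y iota_mult[of x y] by auto
  next
    fix c a assume "a \<in> \<iota> ` carrier R"
    then obtain x where x: "x \<in> carrier R" "a = \<iota> x" by auto
    show "c \<odot>\<^bsub>R1\<^esub> a \<in> \<iota> ` carrier R" using x iota_sm[of x c] by auto
  qed
  show "\<forall>m\<in>carrier R1. (\<iota> \<circ> ER) m \<in> \<iota> ` carrier R" using ER_car by auto
  show "\<forall>a\<in>carrier R1. \<forall>b\<in>carrier R1. (\<iota> \<circ> ER) (a \<oplus>\<^bsub>R1\<^esub> b) = (\<iota> \<circ> ER) a \<oplus>\<^bsub>R1\<^esub> (\<iota> \<circ> ER) b"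
    by (simp add: ER_add ER_car iota_add)
  show "\<forall>a\<in>\<iota> ` carrier R. \<forall>m\<in>carrier R1.
       (\<iota> \<circ> ER) (a \<otimes>\<^bsub>R1\<^esub> m) = a \<otimes>\<^bsub>R1\<^esub> (\<iota> \<circ> ER) m \<and> (\<iota> \<circ> ER) (m \<otimes>\<^bsub>R1\<^esub> a) = (\<iota> \<circ> ER) m \<otimes>\<^bsub>R1\<^esub> a"
    by (auto simp: ER_left ER_right ER_car iota_mult)
  show "\<forall>i<n. r1 i \<in> carrier R1 \<and> s1 i \<in> carrier R1" by (simp add: r1_car s1_car)
  show "\<forall>m\<in>carrier R1. finsum R1 (\<lambda>i. (\<iota> \<circ> ER) (m \<otimes>\<^bsub>R1\<^esub> r1 i) \<otimes>\<^bsub>R1\<^esub> s1 i) {..<n} = m"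
    using next_dual1 by blast
  show "\<forall>m\<in>carrier R1. finsum R1 (\<lambda>i. r1 i \<otimes>\<^bsub>R1\<^esub> (\<iota> \<circ> ER) (s1 i \<otimes>\<^bsub>R1\<^esub> m)) {..<n} = m"
    using next_dual2 by blast
  show "(\<iota> \<circ> ER) \<one>\<^bsub>R1\<^esub> = \<one>\<^bsub>R1\<^esub>" by (simp add: ER_one iota_one)
  show "lam \<noteq> 0" by (rule lam_nz)
  show "finsum R1 (\<lambda>i. r1 i \<otimes>\<^bsub>R1\<^esub> s1 i) {..<n} = inverse lam \<odot>\<^bsub>R1\<^esub> \<one>\<^bsub>R1\<^esub>" by (rule next_rs_sum)
qed

end


context bc begin

lemma ER_zero: "ER \<zero>\<^bsub>R1\<^esub> = \<zero>\<^bsub>R\<^esub>"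
proof -
  have z: "\<zero>\<^bsub>R1\<^esub> \<in> carrier R1" by simp
  have "ER \<zero>\<^bsub>R1\<^esub> = ER \<zero>\<^bsub>R1\<^esub> \<oplus>\<^bsub>R\<^esub> ER \<zero>\<^bsub>R1\<^esub>" using ER_add[OF z z] by simp
  then show ?thesis using ER_car[OF z] by simp
qed

lemma ER_finsum: "finite T \<Longrightarrow> F \<in> T \<rightarrow> carrier R1 \<Longrightarrow> ER (finsum R1 F T) = finsum R (\<lambda>t. ER (F t)) T"
proof (induction T rule: finite_induct)
  case empty then show ?case by (simp add: ER_zero)
next
  case (insert x T)
  then have Fx: "F x \<in> carrier R1" and FT: "F \<in> T \<rightarrow> carrier R1" by auto
  have "ER (finsum R1 F (insert x T)) = ER (F x \<oplus>\<^bsub>R1\<^esub> finsum R1 F T)"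
    using insert Fx FT by (simp add: R1r.finsum_insert)
  also have "\<dots> = ER (F x) \<oplus>\<^bsub>R\<^esub> finsum R (\<lambda>t. ER (F t)) T"
    using Fx FT insert by (simp add: ER_add R1r.finsum_closed)
  also have "\<dots> = finsum R (\<lambda>t. ER (F t)) (insert x T)"
    using insert Fx FT ER_car by (subst Rr.finsum_insert) auto
  finally show ?case .
qed

lemma kill: assumes w: "w \<in> carrier R1" and h: "\<And>u. u \<in> carrier R1 \<Longrightarrow> ER (w \<otimes>\<^bsub>R1\<^esub> u) = \<zero>\<^bsub>R\<^esub>"
  shows "w = \<zero>\<^bsub>R1\<^esub>"
proof -
  have "w = finsum R1 (\<lambda>i. (\<iota> \<circ> ER) (w \<otimes>\<^bsub>R1\<^esub> r1 i) \<otimes>\<^bsub>R1\<^esub> s1 i) {..<n}"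
    using next_dual1[OF w] by simp
  also have "\<dots> = finsum R1 (\<lambda>i. \<zero>\<^bsub>R1\<^esub>) {..<n}"
    using h r1_car s1_car by (intro R1r.finsum_cong') (auto simp: iota_zero)
  also have "\<dots> = \<zero>\<^bsub>R1\<^esub>" by simp
  finally show ?thesis .
qed

lemma basis_kill: assumes B: "free_right_basis R1 R \<iota> Bs" and w: "w \<in> carrier R1"
  and h: "\<And>b. b \<in> Bs \<Longrightarrow> ER (w \<otimes>\<^bsub>R1\<^esub> b) = \<zero>\<^bsub>R\<^esub>"
  shows "w = \<zero>\<^bsub>R1\<^esub>"
proof (rule kill[OF w])
  fix u assume u: "u \<in> carrier R1"
  have Bc: "Bs \<subseteq> carrier R1" using B by (simp add: free_right_basis_def)
  obtain g where g: "g \<in> Bs \<rightarrow>\<^sub>E carrier R" "finite {b\<in>Bs. g b \<noteq> \<zero>\<^bsub>R\<^esub>}"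
    "u = finsum R1 (\<lambda>b. b \<otimes>\<^bsub>R1\<^esub> \<iota> (g b)) {b\<in>Bs. g b \<noteq> \<zero>\<^bsub>R\<^esub>}"
  proof -
    have "\<forall>u\<in>carrier R1. \<exists>!f. f \<in> Bs \<rightarrow>\<^sub>E carrier R \<and> finite {b\<in>Bs. f b \<noteq> \<zero>\<^bsub>R\<^esub>} \<and>
        u = finsum R1 (\<lambda>b. b \<otimes>\<^bsub>R1\<^esub> \<iota> (f b)) {b\<in>Bs. f b \<noteq> \<zero>\<^bsub>R\<^esub>}"
      using B unfolding free_right_basis_def by (elim conjE)
    then have "\<exists>!f. f \<in> Bs \<rightarrow>\<^sub>E carrier R \<and> finite {b\<in>Bs. f b \<noteq> \<zero>\<^bsub>R\<^esub>} \<and>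
        u = finsum R1 (\<lambda>b. b \<otimes>\<^bsub>R1\<^esub> \<iota> (f b)) {b\<in>Bs. f b \<noteq> \<zero>\<^bsub>R\<^esub>}"
      using u by (rule bspec)
    then have "\<exists>f. f \<in> Bs \<rightarrow>\<^sub>E carrier R \<and> finite {b\<in>Bs. f b \<noteq> \<zero>\<^bsub>R\<^esub>} \<and>
        u = finsum R1 (\<lambda>b. b \<otimes>\<^bsub>R1\<^esub> \<iota> (f b)) {b\<in>Bs. f b \<noteq> \<zero>\<^bsub>R\<^esub>}"
      by (rule ex1_implies_ex)
    then show ?thesis using that by (elim exE conjE)
  qed
  let ?T = "{b\<in>Bs. g b \<noteq> \<zero>\<^bsub>R\<^esub>}"
  have gc: "\<And>b. b \<in> ?T \<Longrightarrow> g b \<in> carrier R" and bc: "\<And>b. b \<in> ?T \<Longrightarrow> b \<in> carrier R1"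
    using g(1) Bc by auto
  have "w \<otimes>\<^bsub>R1\<^esub> u = finsum R1 (\<lambda>b. w \<otimes>\<^bsub>R1\<^esub> (b \<otimes>\<^bsub>R1\<^esub> \<iota> (g b))) ?T"
    unfolding g(3) using g(2) w gc bc iota_car by (intro R1r.finsum_rdistr) auto
  then have "ER (w \<otimes>\<^bsub>R1\<^esub> u) = finsum R (\<lambda>b. ER (w \<otimes>\<^bsub>R1\<^esub> (b \<otimes>\<^bsub>R1\<^esub> \<iota> (g b)))) ?T"
    using g(2) w gc bc iota_car by (simp add: ER_finsum)
  also have "\<dots> = finsum R (\<lambda>b. \<zero>\<^bsub>R\<^esub>) ?T"
  proof (intro Rr.finsum_cong')
    fix b assume b: "b \<in> ?T"
    have "ER (w \<otimes>\<^bsub>R1\<^esub> (b \<otimes>\<^bsub>R1\<^esub> \<iota> (g b))) = ER ((w \<otimes>\<^bsub>R1\<^esub> b) \<otimes>\<^bsub>R1\<^esub> \<iota> (g b))"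
      using w bc[OF b] gc[OF b] iota_car by (simp add: R1r.m_assoc)
    also have "\<dots> = ER (w \<otimes>\<^bsub>R1\<^esub> b) \<otimes>\<^bsub>R\<^esub> g b"
      using w bc[OF b] gc[OF b] by (simp add: ER_right)
    also have "\<dots> = \<zero>\<^bsub>R\<^esub>" using h b gc[OF b] by simp
    finally show "ER (w \<otimes>\<^bsub>R1\<^esub> (b \<otimes>\<^bsub>R1\<^esub> \<iota> (g b))) = \<zero>\<^bsub>R\<^esub>" .
  qed auto
  also have "\<dots> = \<zero>\<^bsub>R\<^esub>" by simp
  finally show "ER (w \<otimes>\<^bsub>R1\<^esub> u) = \<zero>\<^bsub>R\<^esub>" .
qed

end


theorem proposition3p8:
  fixes M :: "('k::field, 'a) module"
    and N :: "'a set"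
    and E :: "'a \<Rightarrow> 'a"
    and x y :: "nat \<Rightarrow> 'a"
    and n :: nat
    and lam :: 'k
  defines "M1 \<equiv> basic_constr M N E x y n"
    and "\<iota>1 \<equiv> bc_incl M N x y n"
    and "EM \<equiv> bc_cond M lam"
  defines "x1 \<equiv> (\<lambda>i. tens_class M N (dlt (inverse lam \<odot>\<^bsub>M\<^esub> x i) \<one>\<^bsub>M\<^esub>))"
    and "y1 \<equiv> (\<lambda>i. tens_class M N (dlt \<one>\<^bsub>M\<^esub> (y i)))"
  defines "M2 \<equiv> basic_constr M1 (\<iota>1 ` carrier M) (\<iota>1 \<circ> EM) x1 y1 n"
    and "\<iota>2 \<equiv> bc_incl M1 (\<iota>1 ` carrier M) x1 y1 n"
    and "EM1 \<equiv> bc_cond M1 lam"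
  defines "A \<equiv> alg_centralizer M1 (\<iota>1 ` N)"
    and "B \<equiv> alg_centralizer M2 (\<iota>2 ` \<iota>1 ` carrier M)"
    and "C \<equiv> alg_centralizer M2 (\<iota>2 ` \<iota>1 ` N)"
  assumes alg: "kalg M"
    and sub: "subalg N M"
    and irred: "alg_centralizer M N = {c \<odot>\<^bsub>M\<^esub> \<one>\<^bsub>M\<^esub> | c. True}"
    and E_into: "\<forall>m\<in>carrier M. E m \<in> N"
    and E_add: "\<forall>a\<in>carrier M. \<forall>b\<in>carrier M. E (a \<oplus>\<^bsub>M\<^esub> b) = E a \<oplus>\<^bsub>M\<^esub> E b"
    and E_bimod: "\<forall>a\<in>N. \<forall>m\<in>carrier M.
                    E (a \<otimes>\<^bsub>M\<^esub> m) = a \<otimes>\<^bsub>M\<^esub> E m \<and> E (m \<otimes>\<^bsub>M\<^esub> a) = E m \<otimes>\<^bsub>M\<^esub> a"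
    and xy_in: "\<forall>i<n. x i \<in> carrier M \<and> y i \<in> carrier M"
    and dual1: "\<forall>m\<in>carrier M. finsum M (\<lambda>i. E (m \<otimes>\<^bsub>M\<^esub> x i) \<otimes>\<^bsub>M\<^esub> y i) {..<n} = m"
    and dual2: "\<forall>m\<in>carrier M. finsum M (\<lambda>i. x i \<otimes>\<^bsub>M\<^esub> E (y i \<otimes>\<^bsub>M\<^esub> m)) {..<n} = m"
    and E_one: "E \<one>\<^bsub>M\<^esub> = \<one>\<^bsub>M\<^esub>"
    and lam_nz: "lam \<noteq> 0"
    and xy_sum: "finsum M (\<lambda>i. x i \<otimes>\<^bsub>M\<^esub> y i) {..<n} = inverse lam \<odot>\<^bsub>M\<^esub> \<one>\<^bsub>M\<^esub>"
    and depth2_1: "\<exists>Bs\<subseteq>A. free_right_basis M1 M \<iota>1 Bs"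
    and depth2_2: "\<exists>Bs\<subseteq>B. free_right_basis M2 M1 \<iota>2 Bs"
  shows "(\<forall>c\<in>C. \<exists>t. EM (EM1 c) = t \<odot>\<^bsub>M\<^esub> \<one>\<^bsub>M\<^esub>) \<and>
         (\<forall>c\<in>C. (\<forall>c'\<in>C. EM (EM1 (c \<otimes>\<^bsub>M2\<^esub> c')) = \<zero>\<^bsub>M\<^esub>) \<longrightarrow> c = \<zero>\<^bsub>M2\<^esub>)"
proof -
  interpret L1: bc M N E x y n lam
    by (rule bc.intro[OF alg sub E_into E_add E_bimod xy_in dual1 dual2 E_one lam_nz xy_sum])
  have x1eq: "x1 = L1.r1" by (rule ext) (simp add: x1_def L1.r1_def)
  have y1eq: "y1 = L1.s1" by (rule ext) (simp add: y1_def L1.s1_def)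
  have b2: "bc M1 (\<iota>1 ` carrier M) (\<iota>1 \<circ> EM) x1 y1 n lam"
    unfolding M1_def \<iota>1_def EM_def x1eq y1eq by (rule L1.bc_next)
  interpret L2: bc M1 "\<iota>1 ` carrier M" "\<iota>1 \<circ> EM" x1 y1 n lam by (rule b2)
  have ringM: "ring M" by (rule L1.Rr.ring_axioms)
  have ringM1: "ring M1" by (rule L2.Rr.ring_axioms)
  have ringM2: "ring M2" unfolding M2_def by (rule L2.ring1)
  interpret M2r: ring M2 by (rule ringM2)
  have F1: "\<And>U. U \<in> carrier M1 \<Longrightarrow> EM U \<in> carrier M"
    using L1.ER_car by (simp add: M1_def EM_def)
  have F2: "\<And>a U. a \<in> carrier M \<Longrightarrow> U \<in> carrier M1 \<Longrightarrow> EM (\<iota>1 a \<otimes>\<^bsub>M1\<^esub> U) = a \<otimes>\<^bsub>M\<^esub> EM U"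
    using L1.ER_left by (simp add: M1_def EM_def \<iota>1_def)
  have F3: "\<And>a U. a \<in> carrier M \<Longrightarrow> U \<in> carrier M1 \<Longrightarrow> EM (U \<otimes>\<^bsub>M1\<^esub> \<iota>1 a) = EM U \<otimes>\<^bsub>M\<^esub> a"
    using L1.ER_right by (simp add: M1_def EM_def \<iota>1_def)
  have F4: "\<And>a. a \<in> carrier M \<Longrightarrow> \<iota>1 a \<in> carrier M1"
    using L1.iota_car by (simp add: M1_def \<iota>1_def)
  have F5: "\<And>a b. a \<in> carrier M \<Longrightarrow> b \<in> carrier M \<Longrightarrow> \<iota>1 a \<otimes>\<^bsub>M1\<^esub> \<iota>1 b = \<iota>1 (a \<otimes>\<^bsub>M\<^esub> b)"
    using L1.iota_mult by (simp add: M1_def \<iota>1_def)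
  have G1: "\<And>U. U \<in> carrier M2 \<Longrightarrow> EM1 U \<in> carrier M1"
    using L2.ER_car by (simp add: M2_def EM1_def)
  have G2: "\<And>a U. a \<in> carrier M1 \<Longrightarrow> U \<in> carrier M2 \<Longrightarrow> EM1 (\<iota>2 a \<otimes>\<^bsub>M2\<^esub> U) = a \<otimes>\<^bsub>M1\<^esub> EM1 U"
    using L2.ER_left by (simp add: M2_def EM1_def \<iota>2_def)
  have G3: "\<And>a U. a \<in> carrier M1 \<Longrightarrow> U \<in> carrier M2 \<Longrightarrow> EM1 (U \<otimes>\<^bsub>M2\<^esub> \<iota>2 a) = EM1 U \<otimes>\<^bsub>M1\<^esub> a"
    using L2.ER_right by (simp add: M2_def EM1_def \<iota>2_def)
  have G4: "\<And>a. a \<in> carrier M1 \<Longrightarrow> \<iota>2 a \<in> carrier M2"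
    using L2.iota_car by (simp add: M2_def \<iota>2_def)
  have G5: "\<And>a b. a \<in> carrier M1 \<Longrightarrow> b \<in> carrier M1 \<Longrightarrow> \<iota>2 a \<otimes>\<^bsub>M2\<^esub> \<iota>2 b = \<iota>2 (a \<otimes>\<^bsub>M1\<^esub> b)"
    using L2.iota_mult by (simp add: M2_def \<iota>2_def)
  have K1: "\<And>Bs w. free_right_basis M1 M \<iota>1 Bs \<Longrightarrow> w \<in> carrier M1 \<Longrightarrow>
      (\<And>b. b \<in> Bs \<Longrightarrow> EM (w \<otimes>\<^bsub>M1\<^esub> b) = \<zero>\<^bsub>M\<^esub>) \<Longrightarrow> w = \<zero>\<^bsub>M1\<^esub>"
    using L1.basis_kill by (simp add: M1_def EM_def \<iota>1_def)
  have K2: "\<And>Bs w. free_right_basis M2 M1 \<iota>2 Bs \<Longrightarrow> w \<in> carrier M2 \<Longrightarrow>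
      (\<And>b. b \<in> Bs \<Longrightarrow> EM1 (w \<otimes>\<^bsub>M2\<^esub> b) = \<zero>\<^bsub>M1\<^esub>) \<Longrightarrow> w = \<zero>\<^bsub>M2\<^esub>"
    using L2.basis_kill by (simp add: M2_def EM1_def \<iota>2_def)
  have NM: "N \<subseteq> carrier M" using sub by (simp add: subalg_def)
  have Ccar: "\<And>c. c \<in> C \<Longrightarrow> c \<in> carrier M2" by (simp add: C_def alg_centralizer_def)
  have Ccomm: "\<And>c a. c \<in> C \<Longrightarrow> a \<in> N \<Longrightarrow> c \<otimes>\<^bsub>M2\<^esub> \<iota>2 (\<iota>1 a) = \<iota>2 (\<iota>1 a) \<otimes>\<^bsub>M2\<^esub> c"
    by (simp add: C_def alg_centralizer_def)
  show ?thesis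
  proof (intro conjI ballI impI)
    fix c assume c: "c \<in> C"
    have cc: "c \<in> carrier M2" using Ccar[OF c] .
    have Fc: "EM (EM1 c) \<in> carrier M" using F1 G1 cc by blast
    have "EM (EM1 c) \<in> alg_centralizer M N"
      unfolding alg_centralizer_def
    proof (intro CollectI conjI ballI Fc)
      fix a assume a: "a \<in> N"
      have ac: "a \<in> carrier M" using a NM by auto
      have "a \<otimes>\<^bsub>M\<^esub> EM (EM1 c) = EM (\<iota>1 a \<otimes>\<^bsub>M1\<^esub> EM1 c)" using F2 ac G1 cc by simp
      also have "\<dots> = EM (EM1 (\<iota>2 (\<iota>1 a) \<otimes>\<^bsub>M2\<^esub> c))" using G2 F4 ac cc by simp
      also have "\<dots> = EM (EM1 (c \<otimes>\<^bsub>M2\<^esub> \<iota>2 (\<iota>1 a)))" using Ccomm[OF c a] by simp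
      also have "\<dots> = EM (EM1 c \<otimes>\<^bsub>M1\<^esub> \<iota>1 a)" using G3 F4 ac cc by simp
      also have "\<dots> = EM (EM1 c) \<otimes>\<^bsub>M\<^esub> a" using F3 ac G1 cc by simp
      finally show "EM (EM1 c) \<otimes>\<^bsub>M\<^esub> a = a \<otimes>\<^bsub>M\<^esub> EM (EM1 c)" by simp
    qed
    then show "\<exists>t. EM (EM1 c) = t \<odot>\<^bsub>M\<^esub> \<one>\<^bsub>M\<^esub>" using irred by auto
  next
    fix c assume c: "c \<in> C" and h: "\<forall>c'\<in>C. EM (EM1 (c \<otimes>\<^bsub>M2\<^esub> c')) = \<zero>\<^bsub>M\<^esub>"
    have cc: "c \<in> carrier M2" using Ccar[OF c] .
    obtain Bs1 where Bs1: "Bs1 \<subseteq> A" "free_right_basis M1 M \<iota>1 Bs1" using depth2_1 by blast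
    obtain Bs2 where Bs2: "Bs2 \<subseteq> B" "free_right_basis M2 M1 \<iota>2 Bs2" using depth2_2 by blast
    show "c = \<zero>\<^bsub>M2\<^esub>"
    proof (rule K2[OF Bs2(2) cc])
      fix \<beta> assume \<beta>: "\<beta> \<in> Bs2"
      have \<beta>B: "\<beta> \<in> B" using \<beta> Bs2(1) by auto
      have \<beta>c: "\<beta> \<in> carrier M2" using \<beta>B by (simp add: B_def alg_centralizer_def)
      have \<beta>comm: "\<And>m. m \<in> carrier M \<Longrightarrow> \<beta> \<otimes>\<^bsub>M2\<^esub> \<iota>2 (\<iota>1 m) = \<iota>2 (\<iota>1 m) \<otimes>\<^bsub>M2\<^esub> \<beta>"
        using \<beta>B by (simp add: B_def alg_centralizer_def)
      let ?w = "EM1 (c \<otimes>\<^bsub>M2\<^esub> \<beta>)"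
      have wc: "?w \<in> carrier M1" using G1 cc \<beta>c M2r.m_closed by blast
      show "?w = \<zero>\<^bsub>M1\<^esub>"
      proof (rule K1[OF Bs1(2) wc])
        fix b assume b: "b \<in> Bs1"
        have bA: "b \<in> A" using b Bs1(1) by auto
        have bc: "b \<in> carrier M1" using bA by (simp add: A_def alg_centralizer_def)
        have bcomm: "\<And>a. a \<in> N \<Longrightarrow> b \<otimes>\<^bsub>M1\<^esub> \<iota>1 a = \<iota>1 a \<otimes>\<^bsub>M1\<^esub> b"
          using bA by (simp add: A_def alg_centralizer_def)
        have ib: "\<iota>2 b \<in> carrier M2" using G4 bc by blast
        have prodC: "\<beta> \<otimes>\<^bsub>M2\<^esub> \<iota>2 b \<in> C"
          unfolding C_def alg_centralizer_def
        proof (intro CollectI conjI ballI)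
          show "\<beta> \<otimes>\<^bsub>M2\<^esub> \<iota>2 b \<in> carrier M2" using \<beta>c ib M2r.m_closed by blast
          fix z assume "z \<in> \<iota>2 ` \<iota>1 ` N"
          then obtain a where a: "a \<in> N" "z = \<iota>2 (\<iota>1 a)" by auto
          have ac: "a \<in> carrier M" using a NM by auto
          have zc: "z \<in> carrier M2" using a ac F4 G4 by blast
          have bz: "\<iota>2 b \<otimes>\<^bsub>M2\<^esub> z = z \<otimes>\<^bsub>M2\<^esub> \<iota>2 b"
            using a ac bc F4 G5 bcomm[OF a(1)] by simp
          have "\<beta> \<otimes>\<^bsub>M2\<^esub> \<iota>2 b \<otimes>\<^bsub>M2\<^esub> z = \<beta> \<otimes>\<^bsub>M2\<^esub> (\<iota>2 b \<otimes>\<^bsub>M2\<^esub> z)"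
            using \<beta>c ib zc by (simp add: M2r.m_assoc)
          also have "\<dots> = \<beta> \<otimes>\<^bsub>M2\<^esub> z \<otimes>\<^bsub>M2\<^esub> \<iota>2 b"
            using \<beta>c ib zc bz by (simp add: M2r.m_assoc)
          also have "\<dots> = z \<otimes>\<^bsub>M2\<^esub> \<beta> \<otimes>\<^bsub>M2\<^esub> \<iota>2 b"
            using \<beta>comm[OF ac] a by simp
          also have "\<dots> = z \<otimes>\<^bsub>M2\<^esub> (\<beta> \<otimes>\<^bsub>M2\<^esub> \<iota>2 b)"
            using \<beta>c ib zc by (simp add: M2r.m_assoc)
          finally show "\<beta> \<otimes>\<^bsub>M2\<^esub> \<iota>2 b \<otimes>\<^bsub>M2\<^esub> z = z \<otimes>\<^bsub>M2\<^esub> (\<beta> \<otimes>\<^bsub>M2\<^esub> \<iota>2 b)" .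
        qed
        have "EM (?w \<otimes>\<^bsub>M1\<^esub> b) = EM (EM1 (c \<otimes>\<^bsub>M2\<^esub> \<beta> \<otimes>\<^bsub>M2\<^esub> \<iota>2 b))"
          using G3 bc cc \<beta>c M2r.m_closed by simp
        also have "\<dots> = EM (EM1 (c \<otimes>\<^bsub>M2\<^esub> (\<beta> \<otimes>\<^bsub>M2\<^esub> \<iota>2 b)))"
          using cc \<beta>c ib by (simp add: M2r.m_assoc)
        also have "\<dots> = \<zero>\<^bsub>M\<^esub>" using h prodC by blast
        finally show "EM (?w \<otimes>\<^bsub>M1\<^esub> b) = \<zero>\<^bsub>M\<^esub>" .
      qed
    qed
  qed
qed


end
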